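(* Let $(m_j)_{j=1}^{\infty}$ be a strictly increasing sequence of positive integers with $m_{j+1}\ge q\,m_j$ for all $j$, where $q\ge 2$. Let $A_j>0$, $B_j\in\mathbb{C}$ satisfy $A_j^2-|B_j|^2=1$ for all $j$, and assume $\sum_{j=1}^{\infty}\log(A_j^2+|B_j|^2)<\infty$. Then for almost every $t\in\mathbb{T}$ the limit $$\lim_{N\to\infty}\prod_{j=1}^{N}\begin{bmatrix} A_j & B_j e^{2\pi i m_j t}\\ \overline{B_j}e^{-2\pi i m_j t} & A_j\end{bmatrix}$$ (factors multiplied in increasing order of $j$ from left to right) exists in $\mathrm{SU}(1,1)$.
   Context: $\mathbb{T}=\mathbb{R}/\mathbb{Z}$ with Lebesgue measure. $\mathrm{SU}(1,1)=\{\begin{bmatrix} A & B\\ \overline{B} & \overline{A}\end{bmatrix}: A,B\in\mathbb{C},\ |A|^2-|B|^2=1\}$, with convergence understood with respect to the complete metric $\rho(G_1,G_2)=\log(1+\|G_1^{-1}G_2-I_2\|_{op})$ (equivalently, entrywise convergence within $\mathrm{SU}(1,1)$). *)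

theory Defs
  imports "HOL-Analysis.Analysis"
begin

definition mat2 :: "complex \<Rightarrow> complex \<Rightarrow> complex \<Rightarrow> complex \<Rightarrow> complex^2^2" where
  "mat2 a b c d = vector [vector [a, b], vector [c, d]]"

definition SU11 :: "(complex^2^2) set" where
  "SU11 = {G. \<exists>A B. G = mat2 A B (cnj B) (cnj A) \<and> (cmod A)\<^sup>2 - (cmod B)\<^sup>2 = 1}"

definition factor :: "(nat \<Rightarrow> real) \<Rightarrow> (nat \<Rightarrow> complex) \<Rightarrow> (nat \<Rightarrow> nat) \<Rightarrow> nat \<Rightarrow> real \<Rightarrow> complex^2^2" where
  "factor A B m j t = mat2 (complex_of_real (A j)) (B j * exp (2 * pi * \<i> * of_nat (m j) * of_real t))
                           (cnj (B j) * exp (- (2 * pi * \<i> * of_nat (m j) * of_real t))) (complex_of_real (A j))"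

fun partial_prod :: "(nat \<Rightarrow> real) \<Rightarrow> (nat \<Rightarrow> complex) \<Rightarrow> (nat \<Rightarrow> nat) \<Rightarrow> nat \<Rightarrow> real \<Rightarrow> complex^2^2" where
  "partial_prod A B m 0 t = mat 1"
| "partial_prod A B m (Suc N) t = partial_prod A B m N t ** factor A B m (Suc N) t"

end

theory Submission
  imports Defs
begin

lemma mat2_mult: "mat2 a b c d ** mat2 a' b' c' d' = mat2 (a*a' + b*c') (a*b'+b*d') (c*a'+d*c') (c*b'+d*d')"
  unfolding mat2_def
  by (simp add: vec_eq_iff matrix_matrix_mult_def forall_2 sum_2 vector_def)

definition E :: "int \<Rightarrow> real \<Rightarrow> complex" where
  "E j t = exp (2 * pi * \<i> * of_int j * of_real t)"

lemma E_add_freq: "E (j + l) t = E j t * E l t"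
proof -
  have "2 * pi * \<i> * of_int (j+l) * of_real t = 2 * pi * \<i> * of_int j * of_real t + 2 * pi * \<i> * of_int l * of_real t"
    by (simp add: algebra_simps)
  then show ?thesis unfolding E_def by (simp only: exp_add)
qed

lemma E_neg_freq: "E (- j) t = inverse (E j t)"
  unfolding E_def by (simp add: exp_minus[symmetric])

lemma E_add_time: "E j (t + s) = E j t * E j s"
proof -
  have "2 * pi * \<i> * of_int j * of_real (t+s) = 2 * pi * \<i> * of_int j * of_real t + 2 * pi * \<i> * of_int j * of_real s"
    by (simp add: algebra_simps)
  then show ?thesis unfolding E_def by (simp only: exp_add)
qed

lemma E_zero[simp]: "E 0 t = 1"
  unfolding E_def by simp

lemma norm_E[simp]: "cmod (E j t) = 1"
  unfolding E_def by (simp add: norm_exp_eq_Re)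

lemma cnj_E: "cnj (E j t) = E (- j) t"
  unfolding E_def by (simp add: exp_cnj)

lemma E_nonzero[simp]: "E j t \<noteq> 0"
  unfolding E_def by simp

lemma E_mult_cnj: "E j t * cnj (E j t) = 1"
  by (simp add: cnj_E E_neg_freq)

lemma continuous_on_E: "continuous_on S (E j)"
  unfolding E_def by (intro continuous_intros)

lemma E_deriv:
  "((\<lambda>t. E j t) has_vector_derivative (2 * pi * \<i> * of_int j * E j t)) (at t within S)"
proof -
  have "((\<lambda>z. exp (2 * pi * \<i> * of_int j * z)) has_field_derivative
         (2 * pi * \<i> * of_int j * exp (2 * pi * \<i> * of_int j * of_real t))) (at (of_real t))"
    by (auto intro!: derivative_eq_intros)
  from has_vector_derivative_real_field[OF this, of S] show ?thesis
    unfolding E_def by simp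
qed

lemma E_has_integral:
  assumes "a \<le> b" "j \<noteq> 0"
  shows "(E j has_integral ((E j b - E j a) / (2 * pi * \<i> * of_int j))) {a..b}"
proof -
  define c where "c = 2 * pi * \<i> * of_int j"
  have nz: "c \<noteq> 0" using assms by (simp add: c_def)
  have fe: "(\<lambda>t. E j t / c) = (\<lambda>t. inverse c * E j t)"
    by (rule ext) (simp add: divide_inverse mult.commute)
  have "((\<lambda>t. E j t / c) has_vector_derivative E j t) (at t within {a..b})" for t
  proof -
    have "((\<lambda>t. inverse c * E j t) has_vector_derivative
          inverse c * (c * E j t)) (at t within {a..b})"
      unfolding c_def by (rule has_vector_derivative_mult_right[OF E_deriv])
    moreover have "inverse c * (c * E j t) = E j t" using nz by simp
    ultimately show ?thesis unfolding fe by simp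
  qed
  from fundamental_theorem_of_calculus[OF assms(1), of "\<lambda>t. E j t / c" "E j"] this
  have "(E j has_integral (E j b / c - E j a / c)) {a..b}" by blast
  then show ?thesis unfolding c_def[symmetric] by (simp only: diff_divide_distrib)
qed

lemma E_periodic: "E j (t + of_int n) = E j t"
proof -
  have "E j (of_int n) = exp ((2 * of_int (j * n) * pi) * \<i>)"
    unfolding E_def by (simp add: algebra_simps)
  also have "\<dots> = 1" by (rule exp_integer_2pi) simp
  finally show ?thesis by (simp add: E_add_time)
qed

lemma E_has_integral_period:
  assumes "n \<ge> 0"
  shows "(E j has_integral (if j = 0 then of_int n else 0)) {a..a + of_int n}"
proof (cases "j = 0")
  case True
  have e: "E 0 = (\<lambda>_. 1)" by (rule ext) simp
  have "((\<lambda>_. 1::complex) has_integral (of_real (of_int n))) {a..a + of_int n}"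
    using has_integral_const_real[of "1::complex" a "a + of_int n"] assms
    by (simp add: scaleR_conv_of_real)
  then show ?thesis using True by (simp add: e)
next
  case False
  from E_has_integral[OF _ False, of a "a + of_int n"] assms
  show ?thesis using False by (simp add: E_periodic)
qed

definition supp :: "(int \<Rightarrow> complex) \<Rightarrow> int set" where
  "supp c = {j. c j \<noteq> 0}"
definition tp :: "(int \<Rightarrow> complex) \<Rightarrow> real \<Rightarrow> complex" where
  "tp c t = (\<Sum>j\<in>supp c. c j * E j t)"
definition sq :: "(int \<Rightarrow> complex) \<Rightarrow> real" where
  "sq c = (\<Sum>j\<in>supp c. (cmod (c j))\<^sup>2)"

lemma tp_eq_sum:
  assumes "finite S" "supp c \<subseteq> S"
  shows "tp c t = (\<Sum>j\<in>S. c j * E j t)"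
  unfolding tp_def
  by (rule sum.mono_neutral_left[OF assms]) (auto simp: supp_def)

lemma sq_eq_sum:
  assumes "finite S" "supp c \<subseteq> S"
  shows "sq c = (\<Sum>j\<in>S. (cmod (c j))\<^sup>2)"
  unfolding sq_def
  by (rule sum.mono_neutral_left[OF assms]) (auto simp: supp_def)

lemma sq_nonneg: "sq c \<ge> 0"
  unfolding sq_def by (simp add: sum_nonneg)

lemma supp_add: "supp (\<lambda>j. c j + d j) \<subseteq> supp c \<union> supp d"
  by (auto simp: supp_def)
lemma supp_diff: "supp (\<lambda>j. c j - d j) \<subseteq> supp c \<union> supp d"
  by (auto simp: supp_def)
lemma supp_mult: "supp (\<lambda>j. a j * c j) \<subseteq> supp c"
  by (auto simp: supp_def)
lemma supp_shift: "supp (\<lambda>j. c (j - s)) = (\<lambda>j. j + s) ` supp c"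
proof (auto simp: supp_def image_iff)
  fix x assume "c (x - s) \<noteq> 0"
  then show "\<exists>xa. c xa \<noteq> 0 \<and> x = xa + s" by (intro exI[of _ "x - s"]) simp
qed

lemma fs_add: "finite (supp c) \<Longrightarrow> finite (supp d) \<Longrightarrow> finite (supp (\<lambda>j. c j + d j))"
  by (rule finite_subset[OF supp_add]) simp
lemma fs_diff: "finite (supp c) \<Longrightarrow> finite (supp d) \<Longrightarrow> finite (supp (\<lambda>j. c j - d j))"
  by (rule finite_subset[OF supp_diff]) simp
lemma fs_mult: "finite (supp c) \<Longrightarrow> finite (supp (\<lambda>j. a j * c j))"
  by (rule finite_subset[OF supp_mult])
lemma fs_shift: "finite (supp c) \<Longrightarrow> finite (supp (\<lambda>j. c (j - s)))"
  by (simp add: supp_shift)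

lemma tp_add:
  assumes "finite (supp c)" "finite (supp d)"
  shows "tp (\<lambda>j. c j + d j) t = tp c t + tp d t"
proof -
  let ?S = "supp c \<union> supp d"
  have "tp (\<lambda>j. c j + d j) t = (\<Sum>j\<in>?S. (c j + d j) * E j t)"
    using assms supp_add by (intro tp_eq_sum) auto
  also have "\<dots> = (\<Sum>j\<in>?S. c j * E j t) + (\<Sum>j\<in>?S. d j * E j t)"
    by (simp add: distrib_right sum.distrib)
  also have "\<dots> = tp c t + tp d t"
  proof -
    have "tp c t = (\<Sum>j\<in>?S. c j * E j t)" by (rule tp_eq_sum) (use assms in auto)
    moreover have "tp d t = (\<Sum>j\<in>?S. d j * E j t)" by (rule tp_eq_sum) (use assms in auto)
    ultimately show ?thesis by simp
  qed
  finally show ?thesis .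
qed

lemma tp_diff:
  assumes "finite (supp c)" "finite (supp d)"
  shows "tp (\<lambda>j. c j - d j) t = tp c t - tp d t"
proof -
  let ?S = "supp c \<union> supp d"
  have "tp (\<lambda>j. c j - d j) t = (\<Sum>j\<in>?S. (c j - d j) * E j t)"
    using assms supp_diff by (intro tp_eq_sum) auto
  also have "\<dots> = (\<Sum>j\<in>?S. c j * E j t) - (\<Sum>j\<in>?S. d j * E j t)"
    by (simp add: left_diff_distrib sum_subtractf)
  also have "\<dots> = tp c t - tp d t"
  proof -
    have "tp c t = (\<Sum>j\<in>?S. c j * E j t)" by (rule tp_eq_sum) (use assms in auto)
    moreover have "tp d t = (\<Sum>j\<in>?S. d j * E j t)" by (rule tp_eq_sum) (use assms in auto)
    ultimately show ?thesis by simp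
  qed
  finally show ?thesis .
qed

lemma tp_scale:
  assumes "finite (supp c)"
  shows "tp (\<lambda>j. a * c j) t = a * tp c t"
proof -
  have "tp (\<lambda>j. a * c j) t = (\<Sum>j\<in>supp c. (a * c j) * E j t)"
    using assms supp_mult[of "\<lambda>_. a" c] by (intro tp_eq_sum) auto
  also have "\<dots> = a * tp c t"
    by (simp add: tp_def sum_distrib_left mult.assoc)
  finally show ?thesis .
qed

lemma tp_zero[simp]: "tp (\<lambda>j. 0) t = 0"
  by (simp add: tp_def supp_def)

lemma tp_shift:
  assumes "finite (supp c)"
  shows "tp (\<lambda>j. c (j - s)) t = E s t * tp c t"
proof -
  have "tp (\<lambda>j. c (j - s)) t = (\<Sum>j\<in>(\<lambda>j. j + s) ` supp c. c (j - s) * E j t)"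
    unfolding tp_def supp_shift ..
  also have "\<dots> = (\<Sum>j\<in>supp c. c j * E (j + s) t)"
    by (subst sum.reindex) (auto simp: inj_on_def)
  also have "\<dots> = E s t * tp c t"
    by (simp add: tp_def sum_distrib_left E_add_freq algebra_simps)
  finally show ?thesis .
qed

lemma continuous_on_tp: "continuous_on S (tp c)"
  unfolding tp_def[abs_def]
  by (intro continuous_intros continuous_on_E)

lemma tp_periodic: "tp c (t + of_int n) = tp c t"
  unfolding tp_def by (simp add: E_periodic)

lemma sq_disjoint:
  assumes "finite (supp c)" "finite (supp d)" "\<And>j. c j = 0 \<or> d j = 0"
  shows "sq (\<lambda>j. c j + d j) = sq c + sq d"
proof -
  let ?S = "supp c \<union> supp d"
  have "sq (\<lambda>j. c j + d j) = (\<Sum>j\<in>?S. (cmod (c j + d j))\<^sup>2)"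
    using assms supp_add by (intro sq_eq_sum) auto
  also have "\<dots> = (\<Sum>j\<in>?S. (cmod (c j))\<^sup>2 + (cmod (d j))\<^sup>2)"
  proof (rule sum.cong)
    fix x show "(cmod (c x + d x))\<^sup>2 = (cmod (c x))\<^sup>2 + (cmod (d x))\<^sup>2"
      using assms(3)[of x] by auto
  qed simp
  also have "\<dots> = sq c + sq d"
  proof -
    have "sq c = (\<Sum>j\<in>?S. (cmod (c j))\<^sup>2)" by (rule sq_eq_sum) (use assms in auto)
    moreover have "sq d = (\<Sum>j\<in>?S. (cmod (d j))\<^sup>2)" by (rule sq_eq_sum) (use assms in auto)
    ultimately show ?thesis by (simp add: sum.distrib)
  qed
  finally show ?thesis .
qed

lemma tp_times_cnj:
  assumes "finite (supp c)"
  shows "tp c t * cnj (tp c t) = (\<Sum>j\<in>supp c. \<Sum>l\<in>supp c. c j * cnj (c l) * E (j - l) t)"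
proof -
  have "cnj (tp c t) = (\<Sum>l\<in>supp c. cnj (c l) * E (- l) t)"
    by (simp add: tp_def cnj_E)
  then have "tp c t * cnj (tp c t) = (\<Sum>j\<in>supp c. \<Sum>l\<in>supp c. (c j * E j t) * (cnj (c l) * E (- l) t))"
    by (simp add: tp_def sum_product)
  also have "\<dots> = (\<Sum>j\<in>supp c. \<Sum>l\<in>supp c. c j * cnj (c l) * E (j - l) t)"
    by (intro sum.cong refl) (simp add: E_add_freq[of j "-l" for j l, simplified] algebra_simps)
  finally show ?thesis .
qed

lemma parseval_complex:
  assumes "finite (supp c)" "n \<ge> 0"
  shows "((\<lambda>t. tp c t * cnj (tp c t)) has_integral (of_int n * of_real (sq c))) {a..a + of_int n}"
proof -
  have "((\<lambda>t. \<Sum>j\<in>supp c. \<Sum>l\<in>supp c. c j * cnj (c l) * E (j - l) t) has_integral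
        (\<Sum>j\<in>supp c. \<Sum>l\<in>supp c. c j * cnj (c l) * (if j - l = 0 then of_int n else 0))) {a..a + of_int n}"
    using assms
    by (intro has_integral_sum has_integral_mult_right E_has_integral_period) auto
  also have "(\<Sum>j\<in>supp c. \<Sum>l\<in>supp c. c j * cnj (c l) * (if j - l = 0 then of_int n else 0))
           = (\<Sum>j\<in>supp c. c j * cnj (c j) * of_int n)"
    by (intro sum.cong refl) (simp add: if_distrib sum.delta' assms(1) cong: if_cong)
  also have "\<dots> = of_int n * of_real (sq c)"
  proof -
    have "(\<Sum>j\<in>supp c. c j * cnj (c j) * of_int n) = (\<Sum>j\<in>supp c. of_int n * of_real ((cmod (c j))\<^sup>2))"
      by (intro sum.cong refl) (simp only: complex_norm_square mult.commute)
    then show ?thesis by (simp add: sq_def sum_distrib_left)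
  qed
  finally show ?thesis using tp_times_cnj[OF assms(1)] by simp
qed

lemma parseval:
  assumes "finite (supp c)" "n \<ge> 0"
  shows "((\<lambda>t. (cmod (tp c t))\<^sup>2) has_integral (of_int n * sq c)) {a..a + of_int n}"
proof -
  from has_integral_linear[OF parseval_complex[OF assms] bounded_linear_Re]
  show ?thesis by (simp add: o_def complex_norm_square[symmetric])
qed


lemma E_cis: "E j t = cis (2 * pi * of_int j * t)"
  unfolding E_def cis_conv_exp by (simp add: algebra_simps)

lemma cis_diff_neg: "cis x - cis (- x) = 2 * \<i> * of_real (sin x)"
  by (simp add: complex_eq_iff cis.sel)

definition sincr :: "real \<Rightarrow> int \<Rightarrow> real" where
  "sincr r j = (if j = 0 then 1 else sin (2 * pi * of_int j * r) / (2 * pi * of_int j * r))"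

lemma E_avg:
  assumes "r > 0"
  shows "(E j has_integral (of_real (2 * r * sincr r j) * E j t)) {t - r..t + r}"
proof (cases "j = 0")
  case True
  have e: "E 0 = (\<lambda>_. 1)" by (rule ext) simp
  have "((\<lambda>_. 1::complex) has_integral (of_real (2 * r))) {t - r..t + r}"
    using has_integral_const_real[of "1::complex" "t - r" "t + r"] assms
    by (simp add: scaleR_conv_of_real)
  then show ?thesis using True by (simp add: e sincr_def)
next
  case False
  have "(E j has_integral ((E j (t + r) - E j (t - r)) / (2 * pi * \<i> * of_int j))) {t - r..t + r}"
    using E_has_integral[OF _ False, of "t - r" "t + r"] assms by simp
  also have "(E j (t + r) - E j (t - r)) / (2 * pi * \<i> * of_int j) = of_real (2 * r * sincr r j) * E j t"
  proof -
    have "E j (t + r) - E j (t - r) = E j t * (E j r - E j (- r))"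
      using E_add_time[of j t r] E_add_time[of j t "- r"] by (simp add: algebra_simps)
    also have "E j r - E j (- r) = 2 * \<i> * of_real (sin (2 * pi * of_int j * r))"
      unfolding E_cis using cis_diff_neg[of "2 * pi * of_int j * r"] by simp
    finally have "E j (t + r) - E j (t - r) = E j t * (2 * \<i> * of_real (sin (2 * pi * of_int j * r)))" .
    then show ?thesis using False assms
      by (simp add: sincr_def field_simps)
  qed
  finally show ?thesis .
qed

lemma tp_avg:
  assumes "finite (supp c)" "r > 0"
  shows "(tp c has_integral (of_real (2 * r) * tp (\<lambda>j. of_real (sincr r j) * c j) t)) {t - r..t + r}"
proof -
  have "((\<lambda>s. \<Sum>j\<in>supp c. c j * E j s) has_integral
         (\<Sum>j\<in>supp c. c j * (of_real (2 * r * sincr r j) * E j t))) {t - r..t + r}"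
    by (intro has_integral_sum has_integral_mult_right E_avg assms)
  moreover have "(\<Sum>j\<in>supp c. c j * (of_real (2 * r * sincr r j) * E j t))
      = of_real (2 * r) * tp (\<lambda>j. of_real (sincr r j) * c j) t"
  proof -
    have "tp (\<lambda>j. of_real (sincr r j) * c j) t = (\<Sum>j\<in>supp c. of_real (sincr r j) * c j * E j t)"
      by (rule tp_eq_sum) (use assms supp_mult in auto)
    then show ?thesis by (simp add: sum_distrib_left algebra_simps)
  qed
  ultimately show ?thesis unfolding tp_def[abs_def] by simp
qed

lemma one_minus_cos_le: "0 \<le> y \<Longrightarrow> 1 - cos y \<le> (y::real)"
proof -
  assume y: "0 \<le> y"
  have "(\<lambda>x. x - 1 + cos x) 0 \<le> (\<lambda>x. x - 1 + cos x) y"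
  proof (rule DERIV_nonneg_imp_nondecreasing[OF y])
    fix x assume x: "0 \<le> x" "x \<le> y"
    show "\<exists>d. ((\<lambda>x. x - 1 + cos x) has_real_derivative d) (at x) \<and> 0 \<le> d"
      by (intro exI[of _ "1 - sin x"]) (auto intro!: derivative_eq_intros simp: sin_le_one)
  qed
  then show ?thesis by simp
qed

lemma x_minus_sin_le: "0 \<le> y \<Longrightarrow> y - sin y \<le> (y::real)\<^sup>2 / 2"
proof -
  assume y: "0 \<le> y"
  have "(\<lambda>x. x\<^sup>2 / 2 - x + sin x) 0 \<le> (\<lambda>x. x\<^sup>2 / 2 - x + sin x) y"
  proof (rule DERIV_nonneg_imp_nondecreasing[OF y])
    fix x assume x: "0 \<le> x" "x \<le> y"
    show "\<exists>d. ((\<lambda>x. x\<^sup>2 / 2 - x + sin x) has_real_derivative d) (at x) \<and> 0 \<le> d"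
      using one_minus_cos_le[of x] x
      by (intro exI[of _ "x - 1 + cos x"]) (auto intro!: derivative_eq_intros)
  qed
  then show ?thesis by simp
qed

lemma min_inv_sum:
  fixes y :: "nat \<Rightarrow> real"
  assumes pos: "\<And>k. M \<le> k \<Longrightarrow> 0 < y k"
    and lac: "\<And>k. M \<le> k \<Longrightarrow> 2 * y k \<le> y (Suc k)"
  shows "(\<Sum>k\<in>{M..L}. min (y k) (1 / y k)) \<le> 4"
proof -
  define \<phi> where "\<phi> x = (if x \<le> 1 then 2 * x else 4 - 2 / x)" for x :: real
  have \<phi>_mono: "\<phi> a \<le> \<phi> b" if "0 < a" "a \<le> b" for a b
  proof -
    consider "b \<le> 1" | "a \<le> 1" "1 < b" | "1 < a" by linarith
    then show ?thesis
    proof cases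
      case 2
      have "2 * a \<le> 2" using 2 by simp
      moreover have "2 \<le> 4 - 2 / b" using 2 by (simp add: field_simps)
      ultimately show ?thesis using 2 by (simp add: \<phi>_def)
    qed (use that in \<open>auto simp: \<phi>_def field_simps\<close>)
  qed
  have \<phi>_le: "\<phi> x \<le> 4" if "0 < x" for x
    using that by (auto simp: \<phi>_def field_simps)
  have stepphi: "\<phi> (x / 2) + min x (1 / x) \<le> \<phi> x" if "0 < x" for x
  proof -
    consider "x \<le> 1" | "1 < x" "x \<le> 2" | "2 < x" by linarith
    then show ?thesis
    proof cases
      case 1 then show ?thesis using that by (auto simp: \<phi>_def min_def field_simps)
    next
      case 2
      have "(x - 1) * (x - 3) \<le> 0" using 2 by (intro mult_nonneg_nonpos) auto
      then have "x * x + 3 \<le> 4 * x" by (simp add: algebra_simps)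
      then show ?thesis using 2 that by (auto simp: \<phi>_def min_def field_simps)
    next
      case 3 then show ?thesis using that by (auto simp: \<phi>_def min_def field_simps)
    qed
  qed
  have main: "(\<Sum>k\<in>{M..n}. min (y k) (1 / y k)) \<le> \<phi> (y n)" if "M \<le> n" for n
    using that
  proof (induction n rule: dec_induct)
    case base
    have "min (y M) (1 / y M) \<le> \<phi> (y M)"
      using pos[of M] by (auto simp: \<phi>_def min_def field_simps)
    then show ?case by simp
  next
    case (step n)
    have yn: "0 < y n" using pos step(1) by auto
    have "(\<Sum>k\<in>{M..Suc n}. min (y k) (1 / y k)) = (\<Sum>k\<in>{M..n}. min (y k) (1 / y k)) + min (y (Suc n)) (1 / y (Suc n))"
      using step(1) by (simp add: sum.cl_ivl_Suc)
    also have "\<dots> \<le> \<phi> (y n) + min (y (Suc n)) (1 / y (Suc n))"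
      using step.IH by simp
    also have "\<dots> \<le> \<phi> (y (Suc n) / 2) + min (y (Suc n)) (1 / y (Suc n))"
      using \<phi>_mono[OF yn, of "y (Suc n) / 2"] lac[of n] step(1) by simp
    also have "\<dots> \<le> \<phi> (y (Suc n))"
      using stepphi[of "y (Suc n)"] lac[of n] yn step(1) by simp
    finally show ?case .
  qed
  show ?thesis
  proof (cases "M \<le> L")
    case True
    then show ?thesis using main[OF True] \<phi>_le[OF pos[OF True]] by linarith
  next
    case False
    then show ?thesis by simp
  qed
qed

definition lac :: "(nat \<Rightarrow> nat) \<Rightarrow> bool" where
  "lac mm \<longleftrightarrow> (\<forall>k\<ge>1. 0 < mm k \<and> 2 * mm k \<le> mm (Suc k))"

definition inwin :: "(nat \<Rightarrow> nat) \<Rightarrow> nat \<Rightarrow> int \<Rightarrow> bool" where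
  "inwin mm k j \<longleftrightarrow> - int (mm k) < j \<and> j \<le> int (mm k)"

definition trunc :: "(nat \<Rightarrow> nat) \<Rightarrow> nat \<Rightarrow> (int \<Rightarrow> complex) \<Rightarrow> int \<Rightarrow> complex" where
  "trunc mm k h = (\<lambda>j. if inwin mm k j then h j else 0)"

definition rad :: "(nat \<Rightarrow> nat) \<Rightarrow> nat \<Rightarrow> real" where
  "rad mm k = 1 / (2 * real (mm k))"

definition avgc :: "(nat \<Rightarrow> nat) \<Rightarrow> nat \<Rightarrow> (int \<Rightarrow> complex) \<Rightarrow> int \<Rightarrow> complex" where
  "avgc mm k h = (\<lambda>j. of_real (sincr (rad mm k) j) * h j)"

definition mult :: "(nat \<Rightarrow> nat) \<Rightarrow> nat \<Rightarrow> int \<Rightarrow> real" where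
  "mult mm k j = (if inwin mm k j then 1 else 0) - sincr (rad mm k) j"

definition Rc :: "(nat \<Rightarrow> nat) \<Rightarrow> nat \<Rightarrow> (int \<Rightarrow> complex) \<Rightarrow> int \<Rightarrow> complex" where
  "Rc mm k h = (\<lambda>j. of_real (mult mm k j) * h j)"

lemma trunc_split: "trunc mm k h j = avgc mm k h j + Rc mm k h j"
  by (simp add: trunc_def avgc_def Rc_def mult_def algebra_simps)

lemma sinc_even_bound:
  fixes m :: real and j :: int
  assumes "m > 0" "j \<noteq> 0"
  shows "sincr (1 / (2 * m)) j = sin (pi * \<bar>j\<bar> / m) / (pi * \<bar>j\<bar> / m)"
proof -
  have "sincr (1 / (2 * m)) j = sin (pi * j / m) / (pi * j / m)"
    using assms by (simp add: sincr_def field_simps)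
  also have "\<dots> = sin (pi * \<bar>j\<bar> / m) / (pi * \<bar>j\<bar> / m)"
    by (cases "j \<ge> 0") (auto simp: field_simps)
  finally show ?thesis .
qed

lemma mult_bound:
  fixes m :: nat and j :: int
  assumes m: "m > 0" and j: "j \<noteq> 0"
  shows "((if - int m < j \<and> j \<le> int m then 1 else 0) - sincr (1 / (2 * real m)) j)\<^sup>2
         \<le> 2 * min (\<bar>j\<bar> / m) (m / \<bar>j\<bar>)"
proof -
  define y where "y = pi * \<bar>j\<bar> / m"
  have ypos: "y > 0" using m j by (simp add: y_def)
  have s: "sincr (1 / (2 * real m)) j = sin y / y"
    using sinc_even_bound[of "real m" j] m j by (simp add: y_def)
  have jpos: "(\<bar>j\<bar>::real) > 0" using j by simp
  show ?thesis
  proof (cases "- int m < j \<and> j \<le> int m")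
    case True
    then have jm: "\<bar>j\<bar> \<le> real m" by auto
    then have ypi: "y \<le> pi" using m by (simp add: y_def field_simps)
    have s0: "0 \<le> sin y / y" using sin_ge_zero[of y] ypos ypi by simp
    have s1: "sin y / y \<le> 1" using sin_x_le_x[of y] ypos by simp
    have "(1 - sin y / y)\<^sup>2 \<le> 1 - sin y / y"
      using s0 s1 by (simp add: power2_eq_square mult_le_cancel_right1 mult_left_le)
    also have "1 - sin y / y = (y - sin y) / y" using ypos by (simp add: field_simps)
    also have "\<dots> \<le> (y\<^sup>2 / 2) / y"
      using x_minus_sin_le[of y] ypos by (intro divide_right_mono) auto
    also have "\<dots> = y / 2" using ypos by (simp add: power2_eq_square)
    also have "\<dots> \<le> 2 * (\<bar>j\<bar> / m)"
      using m pi_less_4 jpos by (simp add: y_def field_simps)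
    also have "\<bar>j\<bar> / m = min (\<bar>j\<bar> / m) (m / \<bar>j\<bar>)"
    proof -
      have a1: "\<bar>j\<bar> / m \<le> 1" using jm m by simp
      have a2: "1 \<le> m / \<bar>j\<bar>" using jm jpos by simp
      show ?thesis using a1 a2 by (simp add: min_def)
    qed
    finally show ?thesis using True s by simp
  next
    case False
    then have jm: "real m \<le> \<bar>j\<bar>" by auto
    have "(sin y / y)\<^sup>2 \<le> 1 / y\<^sup>2"
    proof -
      have "(sin y)\<^sup>2 \<le> 1" using abs_sin_le_one[of y] by (simp add: abs_square_le_1)
      then show ?thesis by (simp add: power_divide divide_right_mono)
    qed
    also have "1 / y\<^sup>2 = (m / \<bar>j\<bar>)\<^sup>2 / pi\<^sup>2"
      using m jpos by (simp add: y_def field_simps)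
    also have "\<dots> \<le> (m / \<bar>j\<bar>)\<^sup>2"
    proof -
      have p1: "1 \<le> pi\<^sup>2" using pi_gt3 one_le_power[of pi 2] by simp
      have "(m / \<bar>j\<bar>)\<^sup>2 / pi\<^sup>2 \<le> (m / \<bar>j\<bar>)\<^sup>2 / 1"
        using p1 by (intro divide_left_mono) auto
      then show ?thesis by simp
    qed
    also have "\<dots> \<le> m / \<bar>j\<bar>"
    proof -
      have a1: "m / \<bar>j\<bar> \<le> 1" using jm jpos by simp
      have a0: "0 \<le> m / \<bar>j\<bar>" by simp
      show ?thesis using mult_left_mono[OF a1 a0] by (simp add: power2_eq_square)
    qed
    also have "\<dots> = min (\<bar>j\<bar> / m) (m / \<bar>j\<bar>)"
    proof -
      have a1: "m / \<bar>j\<bar> \<le> 1" using jm jpos by simp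
      have a2: "1 \<le> \<bar>j\<bar> / m" using jm m by simp
      show ?thesis using a1 a2 by (simp add: min_def)
    qed
    finally have fin: "(sin y / y)\<^sup>2 \<le> min (\<bar>j\<bar> / m) (m / \<bar>j\<bar>)" .
    have e: "(if - int m < j \<and> j \<le> int m then 1 else 0) - sincr (1 / (2 * real m)) j = - (sin y / y)"
      using False s by simp
    have "0 \<le> min (\<bar>j\<bar> / m) (m / \<bar>j\<bar>)" by simp
    then show ?thesis unfolding e using fin by (simp only: power2_minus)
  qed
qed


lemma mult_zero: "0 < mm k \<Longrightarrow> mult mm k 0 = 0"
  by (simp add: mult_def inwin_def sincr_def)

lemma mult_sum_bound:
  assumes "lac mm" "1 \<le> M" "j \<noteq> 0"
  shows "(\<Sum>k\<in>{M..L}. (mult mm k j)\<^sup>2) \<le> 8"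
proof -
  define y where "y k = real (mm k) / \<bar>j\<bar>" for k
  have pos: "0 < mm k" if "M \<le> k" for k using assms that by (auto simp: lac_def)
  have ypos: "0 < y k" if "M \<le> k" for k using pos[OF that] assms(3) by (simp add: y_def)
  have ylac: "2 * y k \<le> y (Suc k)" if "M \<le> k" for k
  proof -
    have "2 * mm k \<le> mm (Suc k)" using assms that by (auto simp: lac_def)
    then have "2 * real (mm k) \<le> real (mm (Suc k))" by linarith
    then have "2 * real (mm k) / \<bar>j\<bar> \<le> real (mm (Suc k)) / \<bar>j\<bar>"
      by (intro divide_right_mono) auto
    then show ?thesis by (simp add: y_def)
  qed
  have "(\<Sum>k\<in>{M..L}. (mult mm k j)\<^sup>2) \<le> (\<Sum>k\<in>{M..L}. 2 * min (y k) (1 / y k))"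
  proof (rule sum_mono)
    fix k assume k: "k \<in> {M..L}"
    have "(mult mm k j)\<^sup>2 \<le> 2 * min (\<bar>j\<bar> / mm k) (mm k / \<bar>j\<bar>)"
      using mult_bound[OF pos[of k] assms(3)] k by (simp add: mult_def inwin_def rad_def)
    also have "min (\<bar>j\<bar> / mm k) (mm k / \<bar>j\<bar>) = min (y k) (1 / y k)"
      by (simp add: y_def min.commute)
    finally show "(mult mm k j)\<^sup>2 \<le> 2 * min (y k) (1 / y k)" .
  qed
  also have "\<dots> = 2 * (\<Sum>k\<in>{M..L}. min (y k) (1 / y k))"
    by (simp add: sum_distrib_left)
  also have "\<dots> \<le> 2 * 4"
    using min_inv_sum[of M y L, OF ypos ylac] by simp
  finally show ?thesis by simp
qed

lemma sq_Rc:
  assumes "finite (supp h)"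
  shows "sq (Rc mm k h) = (\<Sum>j\<in>supp h. (mult mm k j)\<^sup>2 * (cmod (h j))\<^sup>2)"
proof -
  have "sq (Rc mm k h) = (\<Sum>j\<in>supp h. (cmod (Rc mm k h j))\<^sup>2)"
    by (rule sq_eq_sum[OF assms]) (auto simp: supp_def Rc_def)
  also have "\<dots> = (\<Sum>j\<in>supp h. (mult mm k j)\<^sup>2 * (cmod (h j))\<^sup>2)"
    by (simp add: Rc_def norm_mult power_mult_distrib)
  finally show ?thesis .
qed

lemma R_sq_sum:
  assumes "lac mm" "1 \<le> M" "finite (supp h)"
  shows "(\<Sum>k\<in>{M..L}. sq (Rc mm k h)) \<le> 8 * sq h"
proof -
  have "(\<Sum>k\<in>{M..L}. sq (Rc mm k h)) = (\<Sum>k\<in>{M..L}. \<Sum>j\<in>supp h. (mult mm k j)\<^sup>2 * (cmod (h j))\<^sup>2)"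
    using sq_Rc[OF assms(3)] by simp
  also have "\<dots> = (\<Sum>j\<in>supp h. (\<Sum>k\<in>{M..L}. (mult mm k j)\<^sup>2) * (cmod (h j))\<^sup>2)"
    by (subst sum.swap) (simp add: sum_distrib_right)
  also have "\<dots> \<le> (\<Sum>j\<in>supp h. 8 * (cmod (h j))\<^sup>2)"
  proof (rule sum_mono)
    fix j assume "j \<in> supp h"
    show "(\<Sum>k\<in>{M..L}. (mult mm k j)\<^sup>2) * (cmod (h j))\<^sup>2 \<le> 8 * (cmod (h j))\<^sup>2"
    proof (cases "j = 0")
      case True
      have "mult mm k j = 0" if "k \<in> {M..L}" for k
        using mult_zero[of mm k] assms(1,2) that True by (auto simp: lac_def)
      then show ?thesis by simp
    next
      case False
      show ?thesis using mult_sum_bound[OF assms(1,2) False, of L]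
        by (intro mult_right_mono) auto
    qed
  qed
  also have "\<dots> = 8 * sq h" by (simp add: sq_def sum_distrib_left)
  finally show ?thesis .
qed

lemma markov_cont:
  fixes G :: "real \<Rightarrow> real"
  assumes "continuous_on {a..b} G" "\<And>t. t \<in> {a..b} \<Longrightarrow> 0 \<le> G t" "0 < c"
  shows "emeasure lborel {t\<in>{a..b}. c \<le> G t} \<le> ennreal (integral {a..b} G / c)"
proof -
  have si: "set_integrable lborel {a..b} G"
    by (rule borel_integrable_atLeastAtMost'[OF assms(1)])
  have "emeasure lborel {t\<in>{a..b}. c \<le> G t} \<le> (1/c) * (LINT x:{a..b}|lborel. G x)"
    by (rule integral_Markov_inequality'[OF si]) (use assms in auto)
  also have "(LINT x:{a..b}|lborel. G x) = integral {a..b} G"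
    using set_borel_integral_eq_integral(2)[OF si] .
  finally show ?thesis by (simp add: divide_inverse mult.commute)
qed

lemma cball_disj_real:
  fixes x y r s :: real
  assumes "0 \<le> r" "0 \<le> s" "disjnt (cball x r) (cball y s)"
  shows "r + s < \<bar>x - y\<bar>"
proof (rule ccontr)
  assume "\<not> r + s < \<bar>x - y\<bar>"
  then have le: "\<bar>x - y\<bar> \<le> r + s" by simp
  show False
  proof (cases "x \<le> y")
    case True
    define z where "z = min (x + r) y"
    have "z \<in> cball x r" "z \<in> cball y s"
      using True le assms(1,2) by (auto simp: z_def cball_eq_atLeastAtMost min_def)
    then show False using assms(3) by (auto simp: disjnt_def)
  next
    case False
    define z where "z = max (x - r) y"
    have "z \<in> cball x r" "z \<in> cball y s"
      using False le assms(1,2) by (auto simp: z_def cball_eq_atLeastAtMost max_def)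
    then show False using assms(3) by (auto simp: disjnt_def)
  qed
qed

lemma disjoint_integral_sum:
  fixes g :: "real \<Rightarrow> real" and rf :: "real \<Rightarrow> real"
  assumes "finite C" "continuous_on UNIV g" "\<And>x. 0 \<le> g x"
    and sub: "\<And>i. i \<in> C \<Longrightarrow> {i - rf i..i + rf i} \<subseteq> {a..b}"
    and disj: "\<And>i j. i \<in> C \<Longrightarrow> j \<in> C \<Longrightarrow> i \<noteq> j \<Longrightarrow> {i - rf i..i + rf i} \<inter> {j - rf j..j + rf j} = {}"
  shows "(\<Sum>i\<in>C. integral {i - rf i..i + rf i} g) \<le> integral {a..b} g"
proof -
  define f where "f i x = (if x \<in> {i - rf i..i + rf i} then g x else 0)" for i x
  have fi: "(f i has_integral integral {i - rf i..i + rf i} g) {a..b}" if "i \<in> C" for i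
  proof -
    have "(g has_integral integral {i - rf i..i + rf i} g) {i - rf i..i + rf i}"
      by (intro integrable_integral integrable_continuous_interval continuous_on_subset[OF assms(2)]) auto
    then show ?thesis unfolding f_def using has_integral_restrict[OF sub[OF that]] by blast
  qed
  have sumI: "((\<lambda>x. \<Sum>i\<in>C. f i x) has_integral (\<Sum>i\<in>C. integral {i - rf i..i + rf i} g)) {a..b}"
    by (rule has_integral_sum[OF assms(1)]) (use fi in auto)
  have gI: "(g has_integral integral {a..b} g) {a..b}"
    by (intro integrable_integral integrable_continuous_interval continuous_on_subset[OF assms(2)]) auto
  have pw: "(\<Sum>i\<in>C. f i x) \<le> g x" for x
  proof (cases "\<exists>i0\<in>C. x \<in> {i0 - rf i0..i0 + rf i0}")
    case True
    then obtain i0 where i0: "i0 \<in> C" "x \<in> {i0 - rf i0..i0 + rf i0}" by blast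
    have "(\<Sum>i\<in>C. f i x) = (\<Sum>i\<in>C. if i = i0 then g x else 0)"
    proof (rule sum.cong)
      fix i assume i: "i \<in> C"
      show "f i x = (if i = i0 then g x else 0)"
      proof (cases "i = i0")
        case True then show ?thesis using i0 by (simp add: f_def)
      next
        case False
        then have "x \<notin> {i - rf i..i + rf i}" using disj[OF i i0(1) False] i0(2) by blast
        then show ?thesis using False by (auto simp: f_def)
      qed
    qed simp
    also have "\<dots> = g x" using i0(1) assms(1) by simp
    finally show ?thesis by simp
  next
    case False
    then have "(\<Sum>i\<in>C. f i x) = 0" by (intro sum.neutral) (auto simp: f_def)
    then show ?thesis using assms(3)[of x] by simp
  qed
  show ?thesis by (rule has_integral_le[OF sumI gI]) (use pw in auto)
qed

lemma vitali_weak: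
  fixes g :: "real \<Rightarrow> real" and S R :: "real set" and lam :: real
  assumes cont: "continuous_on UNIV g" and nonneg: "\<And>x. 0 \<le> g x"
    and finR: "finite R" and Rpos: "\<And>r. r \<in> R \<Longrightarrow> 0 < r \<and> r \<le> 1/2"
    and lam: "0 < lam" and S01: "S \<subseteq> {0..1}"
    and cover: "\<And>t. t \<in> S \<Longrightarrow> \<exists>r\<in>R. 2 * r * lam < integral {t - r..t + r} g"
  shows "emeasure lborel S \<le> ennreal (5 / lam * integral {-1/2..3/2} g)"
proof (cases "S = {}")
  case True then show ?thesis by simp
next
  case False
  have "\<forall>t\<in>S. \<exists>r. r \<in> R \<and> 2 * r * lam < integral {t - r..t + r} g" using cover by blast
  from bchoice[OF this] obtain rf where rf0: "\<forall>t\<in>S. rf t \<in> R \<and> 2 * rf t * lam < integral {t - rf t..t + rf t} g"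
    by blast
  have rf: "rf t \<in> R \<and> 2 * rf t * lam < integral {t - rf t..t + rf t} g" if "t \<in> S" for t
    using rf0 that by blast
  have rfb: "0 < rf t \<and> rf t \<le> 1/2" if "t \<in> S" for t using rf[OF that] Rpos by auto
  have Scov: "S \<subseteq> (\<Union>i\<in>S. cball (id i) (rf i))"
  proof
    fix t assume "t \<in> S"
    moreover have "t \<in> cball (id t) (rf t)" using rfb[OF \<open>t \<in> S\<close>] by simp
    ultimately show "t \<in> (\<Union>i\<in>S. cball (id i) (rf i))" by blast
  qed
  obtain C where C: "countable C" "C \<subseteq> S"
     "pairwise (\<lambda>i j. disjnt (cball (id i) (rf i)) (cball (id j) (rf j))) C"
     "S \<subseteq> (\<Union>i\<in>C. cball (id i) (5 * rf i))"
    using Vitali_covering_lemma_cballs[OF Scov, of "1/2"] rfb by blast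
  have Rne: "R \<noteq> {}" using False rf by blast
  define rmin where "rmin = Min R"
  have rmin_pos: "0 < rmin" using Rpos finR Rne by (simp add: rmin_def)
  have rmin_le: "rmin \<le> rf t" if "t \<in> S" for t using rf[OF that] finR by (simp add: rmin_def)
  have sep: "2 * rmin < \<bar>i - j\<bar>" if "i \<in> C" "j \<in> C" "i \<noteq> j" for i j
  proof -
    have "disjnt (cball i (rf i)) (cball j (rf j))" using C(3) that by (auto simp: pairwise_def)
    moreover have "0 \<le> rf i" "0 \<le> rf j" using rfb C(2) that by (auto simp: less_imp_le)
    ultimately have "rf i + rf j < \<bar>i - j\<bar>"
      using cball_disj_real by blast
    moreover have "rmin \<le> rf i" "rmin \<le> rf j" using rmin_le C(2) that by auto
    ultimately show ?thesis by linarith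
  qed
  have finC: "finite C"
  proof -
    have inj: "inj_on (\<lambda>i. \<lfloor>i / rmin\<rfloor>) C"
    proof (rule inj_onI)
      fix i j assume ij: "i \<in> C" "j \<in> C" "\<lfloor>i / rmin\<rfloor> = \<lfloor>j / rmin\<rfloor>"
      define z where "z = \<lfloor>i / rmin\<rfloor>"
      have zi: "of_int z \<le> i / rmin" "i / rmin < of_int z + 1" unfolding z_def by linarith+
      have zj: "of_int z \<le> j / rmin" "j / rmin < of_int z + 1" unfolding z_def ij(3) by linarith+
      have d1: "\<bar>i / rmin - j / rmin\<bar> < 1" using zi zj by linarith
      have "i - j = (i / rmin - j / rmin) * rmin" using rmin_pos by (simp add: field_simps)
      then have "\<bar>i - j\<bar> = \<bar>i / rmin - j / rmin\<bar> * rmin" using rmin_pos by (simp add: abs_mult)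
      also have "\<dots> < 1 * rmin" using d1 rmin_pos by (intro mult_strict_right_mono) auto
      finally have "\<bar>i - j\<bar> < rmin" by simp
      then show "i = j" using sep[OF ij(1,2)] rmin_pos by (cases "i = j") auto
    qed
    have "(\<lambda>i. \<lfloor>i / rmin\<rfloor>) ` C \<subseteq> {0..\<lfloor>1 / rmin\<rfloor>}"
    proof
      fix z assume "z \<in> (\<lambda>i. \<lfloor>i / rmin\<rfloor>) ` C"
      then obtain i where i: "i \<in> C" "z = \<lfloor>i / rmin\<rfloor>" by blast
      have "i \<in> {0..1}" using i(1) C(2) S01 by auto
      then have a: "0 \<le> i / rmin" and b: "i / rmin \<le> 1 / rmin" using rmin_pos
        by (auto intro: divide_right_mono)
      have "0 \<le> z" using a i(2) by simp
      moreover have "z \<le> \<lfloor>1 / rmin\<rfloor>" using floor_mono[OF b] i(2) by simp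
      ultimately show "z \<in> {0..\<lfloor>1 / rmin\<rfloor>}" by simp
    qed
    then have "finite ((\<lambda>i. \<lfloor>i / rmin\<rfloor>) ` C)" by (rule finite_subset) simp
    then show ?thesis using inj by (rule finite_imageD)
  qed
  have "emeasure lborel S \<le> emeasure lborel (\<Union>i\<in>C. cball i (5 * rf i))"
    using C(4) by (intro emeasure_mono) (auto intro!: sets.finite_UN finC)
  also have "\<dots> \<le> (\<Sum>i\<in>C. emeasure lborel (cball i (5 * rf i)))"
    by (rule emeasure_subadditive_finite[OF finC]) auto
  also have "\<dots> = (\<Sum>i\<in>C. ennreal (10 * rf i))"
  proof (rule sum.cong)
    fix i assume "i \<in> C"
    then have "0 < rf i" using rfb C(2) by auto
    then show "emeasure lborel (cball i (5 * rf i)) = ennreal (10 * rf i)"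
      by (simp add: cball_eq_atLeastAtMost)
  qed simp
  also have "\<dots> = ennreal (\<Sum>i\<in>C. 10 * rf i)"
  proof (rule sum_ennreal)
    fix i assume "i \<in> C"
    then have "0 < rf i" using rfb C(2) by blast
    then show "0 \<le> 10 * rf i" by simp
  qed
  finally have A: "emeasure lborel S \<le> ennreal (\<Sum>i\<in>C. 10 * rf i)" .
  have "(\<Sum>i\<in>C. 10 * rf i) \<le> (\<Sum>i\<in>C. 5 / lam * integral {i - rf i..i + rf i} g)"
  proof (rule sum_mono)
    fix i assume "i \<in> C"
    then have "2 * rf i * lam < integral {i - rf i..i + rf i} g" using rf C(2) by auto
    then show "10 * rf i \<le> 5 / lam * integral {i - rf i..i + rf i} g"
      using lam by (simp add: field_simps)
  qed
  also have "\<dots> = 5 / lam * (\<Sum>i\<in>C. integral {i - rf i..i + rf i} g)"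
    by (simp add: sum_distrib_left)
  finally have B1: "(\<Sum>i\<in>C. 10 * rf i) \<le> 5 / lam * (\<Sum>i\<in>C. integral {i - rf i..i + rf i} g)" .
  have B2: "(\<Sum>i\<in>C. integral {i - rf i..i + rf i} g) \<le> integral {-1/2..3/2} g"
  proof (rule disjoint_integral_sum[OF finC cont nonneg])
    fix i assume "i \<in> C"
    then have "i \<in> {0..1}" "0 < rf i" "rf i \<le> 1/2" using C(2) S01 rfb by auto
    then show "{i - rf i..i + rf i} \<subseteq> {-1/2..3/2}" by auto
  next
    fix i j assume ij: "i \<in> C" "j \<in> C" "i \<noteq> j"
    have "disjnt (cball i (rf i)) (cball j (rf j))" using C(3) ij by (auto simp: pairwise_def)
    then show "{i - rf i..i + rf i} \<inter> {j - rf j..j + rf j} = {}"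
      by (simp add: disjnt_def cball_eq_atLeastAtMost)
  qed
  have B: "(\<Sum>i\<in>C. 10 * rf i) \<le> 5 / lam * integral {-1/2..3/2} g"
    using B1 mult_left_mono[OF B2, of "5 / lam"] lam by simp
  show ?thesis by (rule order_trans[OF A ennreal_leI[OF B]])
qed

lemma borel_less_cont:
  fixes f :: "real \<Rightarrow> real"
  assumes "continuous_on UNIV f"
  shows "{t. c < f t} \<in> sets borel"
proof -
  have "open {t. c < f t}"
    by (rule open_Collect_less) (use assms in \<open>auto intro: continuous_intros\<close>)
  then show ?thesis by simp
qed

lemma borel_le_cont:
  fixes f :: "real \<Rightarrow> real"
  assumes "continuous_on UNIV f"
  shows "{t. c \<le> f t} \<in> sets borel"
proof -
  have "closed {t. c \<le> f t}"
    by (rule closed_Collect_le) (use assms in \<open>auto intro: continuous_intros\<close>)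
  then show ?thesis by simp
qed

lemma fs_trunc: "finite (supp h) \<Longrightarrow> finite (supp (trunc mm k h))"
  by (rule finite_subset[of _ "supp h"]) (auto simp: supp_def trunc_def)
lemma fs_avgc: "finite (supp h) \<Longrightarrow> finite (supp (avgc mm k h))"
  unfolding avgc_def by (rule fs_mult)
lemma fs_Rc: "finite (supp h) \<Longrightarrow> finite (supp (Rc mm k h))"
  unfolding Rc_def by (rule fs_mult)

lemma tp_trunc_split:
  assumes "finite (supp h)"
  shows "tp (trunc mm k h) t = tp (avgc mm k h) t + tp (Rc mm k h) t"
proof -
  have "trunc mm k h = (\<lambda>j. avgc mm k h j + Rc mm k h j)"
    by (rule ext) (rule trunc_split)
  then show ?thesis using tp_add[OF fs_avgc[OF assms] fs_Rc[OF assms]] by simp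
qed

lemma L1_bound:
  assumes "finite (supp h)" "0 < eps"
  shows "integral {-1/2..3/2} (\<lambda>s. cmod (tp h s)) \<le> eps + sq h / eps"
proof -
  have pw: "cmod z \<le> eps / 2 + 1 / (2 * eps) * (cmod z)\<^sup>2" for z
  proof -
    have "0 \<le> (cmod z - eps)\<^sup>2" by simp
    then have "2 * eps * cmod z \<le> eps\<^sup>2 + (cmod z)\<^sup>2" by (simp add: power2_eq_square algebra_simps)
    then show ?thesis using assms(2) by (simp add: field_simps power2_eq_square)
  qed
  have P: "((\<lambda>t. (cmod (tp h t))\<^sup>2) has_integral (2 * sq h)) {-1/2..3/2}"
    using parseval[OF assms(1), where n=2 and a="-1/2"] by simp
  have I1: "((\<lambda>t. eps / 2 + 1 / (2 * eps) * (cmod (tp h t))\<^sup>2) has_integral (eps + sq h / eps)) {-1/2..3/2}"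
  proof -
    have c: "((\<lambda>t. eps / 2) has_integral eps) {-1/2..3/2::real}"
      using has_integral_const_real[of "eps / 2" "-1/2" "3/2"] by simp
    have d: "((\<lambda>t. 1 / (2 * eps) * (cmod (tp h t))\<^sup>2) has_integral (1 / (2 * eps) * (2 * sq h))) {-1/2..3/2}"
      using has_integral_mult_right[OF P, of "1 / (2 * eps)"] by simp
    show ?thesis using has_integral_add[OF c d] assms(2) by simp
  qed
  have I0: "((\<lambda>s. cmod (tp h s)) has_integral integral {-1/2..3/2} (\<lambda>s. cmod (tp h s))) {-1/2..3/2}"
    by (intro integrable_integral integrable_continuous_interval continuous_intros continuous_on_tp)
  show ?thesis by (rule has_integral_le[OF I0 I1]) (use pw in auto)
qed

lemma MI:
  assumes lac: "lac mm" and fs: "finite (supp h)" and lam: "0 < lam" and eps: "0 < eps" and M: "1 \<le> M"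
  shows "emeasure lborel {t\<in>{0..1}. \<exists>k\<in>{M..L}. 2 * lam < cmod (tp (trunc mm k h) t)}
         \<le> ennreal (5 / lam * (eps + sq h / eps) + 8 * sq h / lam\<^sup>2)"
proof -
  define S where "S = {t\<in>{0..1}. \<exists>k\<in>{M..L}. 2 * lam < cmod (tp (trunc mm k h) t)}"
  define S1 where "S1 = {t\<in>{0..1}. \<exists>k\<in>{M..L}. lam < cmod (tp (avgc mm k h) t)}"
  define G where "G t = (\<Sum>k\<in>{M..L}. (cmod (tp (Rc mm k h) t))\<^sup>2)" for t
  define S2 where "S2 = {t\<in>{0..1}. lam\<^sup>2 \<le> G t}"
  have mpos: "0 < mm k" if "M \<le> k" for k using lac M that by (auto simp: lac_def)
  have sub: "S \<subseteq> S1 \<union> S2"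
  proof
    fix t assume "t \<in> S"
    then obtain k where t01: "t \<in> {0..1}" and k: "k \<in> {M..L}" and big: "2 * lam < cmod (tp (trunc mm k h) t)"
      by (auto simp: S_def)
    have "cmod (tp (trunc mm k h) t) \<le> cmod (tp (avgc mm k h) t) + cmod (tp (Rc mm k h) t)"
      unfolding tp_trunc_split[OF fs] by (rule norm_triangle_ineq)
    then consider "lam < cmod (tp (avgc mm k h) t)" | "lam < cmod (tp (Rc mm k h) t)"
      using big by linarith
    then show "t \<in> S1 \<union> S2"
    proof cases
      case 1 then show ?thesis using t01 k by (auto simp: S1_def)
    next
      case 2
      have "lam\<^sup>2 \<le> (cmod (tp (Rc mm k h) t))\<^sup>2"
        using 2 lam by (intro power_mono) auto
      also have "\<dots> \<le> G t" unfolding G_def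
        by (rule member_le_sum) (use k in auto)
      finally show ?thesis using t01 by (auto simp: S2_def)
    qed
  qed
  have contG: "continuous_on UNIV G"
    unfolding G_def by (intro continuous_intros continuous_on_tp)
  have S1_eq: "S1 = {0..1} \<inter> (\<Union>k\<in>{M..L}. {t. lam < cmod (tp (avgc mm k h) t)})"
    by (auto simp: S1_def)
  have bk: "{t. lam < cmod (tp (avgc mm k h) t)} \<in> sets borel" for k
    by (rule borel_less_cont) (intro continuous_intros continuous_on_tp)
  have mS1: "S1 \<in> sets lborel"
    unfolding S1_eq using bk by (intro sets.Int sets.finite_UN) auto
  have S2_eq: "S2 = {0..1} \<inter> {t. lam\<^sup>2 \<le> G t}" by (auto simp: S2_def)
  have mS2: "S2 \<in> sets lborel"
    unfolding S2_eq using borel_le_cont[OF contG, of "lam\<^sup>2"] by (intro sets.Int) auto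
  have "emeasure lborel S \<le> emeasure lborel (S1 \<union> S2)"
    by (rule emeasure_mono[OF sub]) (use mS1 mS2 in auto)
  also have "\<dots> \<le> emeasure lborel S1 + emeasure lborel S2"
    by (rule emeasure_subadditive) (use mS1 mS2 in auto)
  also have "emeasure lborel S1 \<le> ennreal (5 / lam * integral {-1/2..3/2} (\<lambda>s. cmod (tp h s)))"
  proof (rule vitali_weak)
    show "continuous_on UNIV (\<lambda>s. cmod (tp h s))" by (intro continuous_intros continuous_on_tp)
    show "finite (rad mm ` {M..L})" by simp
    show "0 < r \<and> r \<le> 1/2" if rr: "r \<in> rad mm ` {M..L}" for r
    proof -
      obtain k where k: "k \<in> {M..L}" "r = rad mm k" using rr by blast
      then have "1 \<le> real (mm k)" using mpos[of k] by simp
      moreover have "1 / (2 * real (mm k)) \<le> 1 / 2" using calculation by (intro divide_left_mono) auto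
      ultimately show ?thesis using k(2) by (simp add: rad_def)
    qed
    show "S1 \<subseteq> {0..1}" by (auto simp: S1_def)
    show "\<exists>r\<in>rad mm ` {M..L}. 2 * r * lam < integral {t - r..t + r} (\<lambda>s. cmod (tp h s))"
      if "t \<in> S1" for t
    proof -
      obtain k where k: "k \<in> {M..L}" and big: "lam < cmod (tp (avgc mm k h) t)"
        using \<open>t \<in> S1\<close> by (auto simp: S1_def)
      define r where "r = rad mm k"
      have r: "0 < r" using mpos k by (auto simp: r_def rad_def)
      have hi: "(tp h has_integral (of_real (2 * r) * tp (avgc mm k h) t)) {t - r..t + r}"
        using tp_avg[OF fs r, of t] by (simp add: avgc_def r_def)
      have "2 * r * lam < 2 * r * cmod (tp (avgc mm k h) t)"
        using big r by simp
      also have "\<dots> = cmod (integral {t - r..t + r} (tp h))"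
        using integral_unique[OF hi] r by (simp add: norm_mult)
      also have "\<dots> \<le> integral {t - r..t + r} (\<lambda>s. cmod (tp h s))"
        by (intro integral_norm_bound_integral integrable_continuous_interval continuous_intros continuous_on_tp) auto
      finally show ?thesis using k unfolding r_def by blast
    qed
  qed (use lam in auto)
  also have "emeasure lborel S2 \<le> ennreal (integral {0..1} G / lam\<^sup>2)"
    unfolding S2_def
    by (rule markov_cont) (use contG lam in \<open>auto simp: G_def sum_nonneg intro: continuous_on_subset\<close>)
  also have "ennreal (5 / lam * integral {-1/2..3/2} (\<lambda>s. cmod (tp h s))) + ennreal (integral {0..1} G / lam\<^sup>2)
      \<le> ennreal (5 / lam * (eps + sq h / eps) + 8 * sq h / lam\<^sup>2)"
  proof -
    have a: "5 / lam * integral {-1/2..3/2} (\<lambda>s. cmod (tp h s)) \<le> 5 / lam * (eps + sq h / eps)"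
      using L1_bound[OF fs eps] lam by (intro mult_left_mono) auto
    have GI: "(G has_integral (\<Sum>k\<in>{M..L}. sq (Rc mm k h))) {0..1}"
      unfolding G_def using parseval[OF fs_Rc[OF fs], where n=1 and a=0]
      by (intro has_integral_sum) auto
    have b: "integral {0..1} G / lam\<^sup>2 \<le> 8 * sq h / lam\<^sup>2"
      using integral_unique[OF GI] R_sq_sum[OF lac M fs, of L] lam by (simp add: divide_right_mono)
    have a0: "0 \<le> 5 / lam * integral {-1/2..3/2} (\<lambda>s. cmod (tp h s))"
      using lam by (intro mult_nonneg_nonneg integral_nonneg integrable_continuous_interval continuous_intros continuous_on_tp) auto
    have b0: "0 \<le> integral {0..1} G / lam\<^sup>2"
      unfolding G_def by (intro divide_nonneg_nonneg integral_nonneg integrable_continuous_interval continuous_intros continuous_on_tp) (auto simp: sum_nonneg)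
    show ?thesis using a b a0 b0 by (simp add: ennreal_plus[symmetric] del: ennreal_plus)
  qed
  finally show ?thesis unfolding S_def by (simp add: add_mono)
qed

lemma lac_mono:
  assumes "lac mm" "1 \<le> M" "M \<le> k"
  shows "mm M \<le> mm k"
  using assms(3)
proof (induction k rule: dec_induct)
  case base then show ?case by simp
next
  case (step n)
  have "2 * mm n \<le> mm (Suc n)" using assms(1,2) step(1) by (auto simp: lac_def)
  then show ?case using step.IH by simp
qed

lemma inwin_mono:
  assumes "lac mm" "1 \<le> M" "M \<le> k" "inwin mm M j"
  shows "inwin mm k j"
  using lac_mono[OF assms(1-3)] assms(4) by (auto simp: inwin_def)

context
  fixes mm :: "nat \<Rightarrow> nat" and F :: "nat \<Rightarrow> int \<Rightarrow> complex" and Cb :: real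
  assumes lac: "lac mm"
    and fsF: "\<And>N. finite (supp (F N))"
    and proj: "\<And>k N j. 1 \<le> k \<Longrightarrow> k \<le> N \<Longrightarrow> inwin mm k j \<Longrightarrow> F N j = F k j"
    and zero: "\<And>k j. 1 \<le> k \<Longrightarrow> \<not> inwin mm k j \<Longrightarrow> F k j = 0"
    and bnd: "\<And>N. sq (F N) \<le> Cb"
begin

definition D :: "nat \<Rightarrow> nat \<Rightarrow> int \<Rightarrow> complex" where
  "D N M = (\<lambda>j. F N j - F M j)"

lemma fsD: "finite (supp (D N M))"
  unfolding D_def by (intro fs_diff fsF)

lemma trunc_D:
  assumes "1 \<le> M" "M \<le> k" "k \<le> N"
  shows "trunc mm k (D N M) = D k M"
proof (rule ext)
  fix j
  show "trunc mm k (D N M) j = D k M j"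
  proof (cases "inwin mm k j")
    case True
    then show ?thesis using proj[of k N j] assms by (simp add: trunc_def D_def)
  next
    case False
    then have "\<not> inwin mm M j" using inwin_mono[OF lac assms(1,2)] by blast
    then show ?thesis using False zero[of k j] zero[of M j] assms by (simp add: trunc_def D_def)
  qed
qed

lemma tp_trunc_D:
  assumes "1 \<le> M" "M \<le> k" "k \<le> N"
  shows "tp (trunc mm k (D N M)) t = tp (F k) t - tp (F M) t"
proof -
  have "tp (trunc mm k (D N M)) t = tp (D k M) t" by (simp only: trunc_D[OF assms])
  also have "\<dots> = tp (F k) t - tp (F M) t" unfolding D_def by (rule tp_diff[OF fsF fsF])
  finally show ?thesis .
qed

lemma sq_split:
  assumes "1 \<le> M" "M \<le> N"
  shows "sq (F N) = sq (F M) + sq (D N M)"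
proof -
  have "F N = (\<lambda>j. F M j + D N M j)" by (rule ext) (simp add: D_def)
  moreover have "F M j = 0 \<or> D N M j = 0" for j
  proof (cases "inwin mm M j")
    case True then show ?thesis using proj[of M N j] assms by (simp add: D_def)
  next
    case False then show ?thesis using zero[of M j] assms by simp
  qed
  ultimately show ?thesis using sq_disjoint[OF fsF fsD] by metis
qed

lemma sq_cauchy:
  assumes "0 < \<delta>"
  shows "\<exists>M0\<ge>1. \<forall>M N. M0 \<le> M \<longrightarrow> M \<le> N \<longrightarrow> sq (D N M) < \<delta>"
proof -
  define s where "s N = sq (F N)" for N
  have smono: "s M \<le> s N" if "1 \<le> M" "M \<le> N" for M N
    using sq_split[OF that] sq_nonneg[of "D N M"] by (simp add: s_def)
  define L where "L = (SUP N\<in>{1..}. s N)"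
  have bdd: "bdd_above (s ` {1..})" using bnd by (auto simp: s_def bdd_above_def)
  have sL: "s N \<le> L" if "1 \<le> N" for N unfolding L_def by (rule cSUP_upper[OF _ bdd]) (use that in auto)
  have "L - \<delta> < L" using assms by simp
  then have "\<exists>x\<in>{1..}. L - \<delta> < s x"
    using less_cSUP_iff[OF _ bdd, of "L - \<delta>"] unfolding L_def by auto
  then obtain M0 where M0: "M0 \<in> {1..}" "L - \<delta> < s M0" by blast
  show ?thesis
  proof (intro exI[of _ M0] conjI allI impI)
    show "1 \<le> M0" using M0 by simp
    fix M N assume MN: "M0 \<le> M" "M \<le> N"
    have "sq (D N M) = s N - s M" using sq_split[of M N] MN M0 by (simp add: s_def)
    also have "\<dots> < \<delta>" using sL[of N] smono[of M0 M] M0 MN by simp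
    finally show "sq (D N M) < \<delta>" .
  qed
qed

definition Sset :: "nat \<Rightarrow> nat \<Rightarrow> nat \<Rightarrow> real set" where
  "Sset n M L = {t\<in>{0..1}. \<exists>k\<in>{M..L}. 2 * (1 / (real n + 1)) < cmod (tp (F k) t - tp (F M) t)}"

lemma Sset_meas: "Sset n M L \<in> sets lborel"
proof -
  have eq: "Sset n M L = {0..1} \<inter> (\<Union>k\<in>{M..L}. {t. 2 * (1 / (real n + 1)) < cmod (tp (F k) t - tp (F M) t)})"
    by (auto simp: Sset_def)
  have bk: "{t. 2 * (1 / (real n + 1)) < cmod (tp (F k) t - tp (F M) t)} \<in> sets borel" for k
    by (rule borel_less_cont) (intro continuous_intros continuous_on_tp)
  show ?thesis unfolding eq using bk by (intro sets.Int sets.finite_UN) auto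
qed

lemma Sset_mono: "L \<le> L' \<Longrightarrow> Sset n M L \<subseteq> Sset n M L'"
  by (auto simp: Sset_def)

lemma real_choice:
  fixes lam eta :: real
  assumes "0 < lam" "0 < eta"
  defines "eps \<equiv> lam * eta / 20"
  defines "\<delta> \<equiv> min (lam * eps * eta / 20) (lam\<^sup>2 * eta / 32)"
  assumes "0 \<le> x" "x \<le> \<delta>"
  shows "5 / lam * (eps + x / eps) + 8 * x / lam\<^sup>2 \<le> eta"
proof -
  have e: "0 < eps" using assms by (simp add: eps_def)
  have a: "5 / lam * eps = eta / 4" using assms(1) by (simp add: eps_def field_simps)
  have b: "5 / lam * (x / eps) \<le> eta / 4"
  proof -
    have "x \<le> lam * eps * eta / 20" using assms(6) by (simp add: \<delta>_def)
    then have "5 * x \<le> lam * eps * (eta / 4)" by simp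
    then show ?thesis using assms(1) e by (simp add: field_simps)
  qed
  have c: "8 * x / lam\<^sup>2 \<le> eta / 4"
  proof -
    have "x \<le> lam\<^sup>2 * eta / 32" using assms(6) by (simp add: \<delta>_def)
    then have "8 * x \<le> lam\<^sup>2 * (eta / 4)" by simp
    then show ?thesis using assms(1) by (simp add: field_simps)
  qed
  have "5 / lam * (eps + x / eps) = 5 / lam * eps + 5 / lam * (x / eps)" by (simp add: distrib_left)
  then show ?thesis using a b c assms(2) by linarith
qed

lemma Sset_small:
  assumes "0 < eta"
  shows "\<exists>M0\<ge>1. \<forall>L. emeasure lborel (Sset n M0 L) \<le> ennreal eta"
proof -
  define lam where "lam = 1 / (real n + 1)"
  have lam: "0 < lam" by (simp add: lam_def)
  define eps where "eps = lam * eta / 20"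
  define \<delta> where "\<delta> = min (lam * eps * eta / 20) (lam\<^sup>2 * eta / 32)"
  have eps: "0 < eps" using lam assms by (simp add: eps_def)
  have dpos: "0 < \<delta>" using lam assms eps by (simp add: \<delta>_def)
  obtain M0 where M0: "1 \<le> M0" "\<And>M N. M0 \<le> M \<Longrightarrow> M \<le> N \<Longrightarrow> sq (D N M) < \<delta>"
    using sq_cauchy[OF dpos] by blast
  show ?thesis
  proof (intro exI[of _ M0] conjI allI)
    show "1 \<le> M0" by fact
    fix L
    show "emeasure lborel (Sset n M0 L) \<le> ennreal eta"
    proof (cases "M0 \<le> L")
      case False
      then have "Sset n M0 L = {}" by (auto simp: Sset_def)
      then show ?thesis by simp
    next
      case True
      have sub: "Sset n M0 L \<subseteq> {t\<in>{0..1}. \<exists>k\<in>{M0..L}. 2 * lam < cmod (tp (trunc mm k (D L M0)) t)}"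
        using tp_trunc_D[OF M0(1)] by (auto simp: Sset_def lam_def)
      have "emeasure lborel (Sset n M0 L) \<le> emeasure lborel {t\<in>{0..1}. \<exists>k\<in>{M0..L}. 2 * lam < cmod (tp (trunc mm k (D L M0)) t)}"
      proof (rule emeasure_mono[OF sub])
        have bk: "{t. 2 * lam < cmod (tp (trunc mm k (D L M0)) t)} \<in> sets borel" for k
          by (rule borel_less_cont) (intro continuous_intros continuous_on_tp)
        have eq: "{t\<in>{0..1}. \<exists>k\<in>{M0..L}. 2 * lam < cmod (tp (trunc mm k (D L M0)) t)}
           = {0..1} \<inter> (\<Union>k\<in>{M0..L}. {t. 2 * lam < cmod (tp (trunc mm k (D L M0)) t)})" by auto
        show "{t\<in>{0..1}. \<exists>k\<in>{M0..L}. 2 * lam < cmod (tp (trunc mm k (D L M0)) t)} \<in> sets lborel"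
          unfolding eq using bk by (intro sets.Int sets.finite_UN) auto
      qed
      also have "\<dots> \<le> ennreal (5 / lam * (eps + sq (D L M0) / eps) + 8 * sq (D L M0) / lam\<^sup>2)"
        by (rule MI[OF lac fsD lam eps M0(1)])
      also have "\<dots> \<le> ennreal eta"
      proof (rule ennreal_leI)
        have "sq (D L M0) \<le> \<delta>" using M0(2)[of M0 L] True by simp
        then show "5 / lam * (eps + sq (D L M0) / eps) + 8 * sq (D L M0) / lam\<^sup>2 \<le> eta"
          using real_choice[OF lam assms, of "sq (D L M0)"] sq_nonneg[of "D L M0"]
          unfolding eps_def \<delta>_def by simp
      qed
      finally show ?thesis .
    qed
  qed
qed

definition Vset :: "nat \<Rightarrow> real set" where
  "Vset n = (\<Inter>M. \<Union>L. Sset n (Suc M) L)"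

lemma Vset_null: "Vset n \<in> null_sets lborel"
proof -
  have mU: "(\<Union>L. Sset n M L) \<in> sets lborel" for M
    using Sset_meas by (intro sets.countable_UN) auto
  have mV: "Vset n \<in> sets lborel"
    unfolding Vset_def using mU by (intro sets.countable_INT) auto
  have A: "emeasure lborel (Vset n) \<le> 0 + ennreal eta" if eta: "0 < eta" for eta
  proof -
    obtain M0 where M0: "1 \<le> M0" "\<And>L. emeasure lborel (Sset n M0 L) \<le> ennreal eta"
      using Sset_small[OF eta, of n] by blast
    have "Vset n \<subseteq> (\<Union>L. Sset n M0 L)"
    proof
      fix t assume "t \<in> Vset n"
      then have "t \<in> (\<Union>L. Sset n (Suc (M0 - 1)) L)" unfolding Vset_def by blast
      moreover have "Suc (M0 - 1) = M0" using M0(1) by simp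
      ultimately show "t \<in> (\<Union>L. Sset n M0 L)" by simp
    qed
    then have "emeasure lborel (Vset n) \<le> emeasure lborel (\<Union>L. Sset n M0 L)"
      using mU by (intro emeasure_mono) auto
    also have "\<dots> = (SUP L. emeasure lborel (Sset n M0 L))"
    proof -
      have r: "range (\<lambda>L. Sset n M0 L) \<subseteq> sets lborel" by (rule image_subsetI) (rule Sset_meas)
      have i: "incseq (\<lambda>L. Sset n M0 L)" by (simp add: incseq_def Sset_mono)
      show ?thesis by (rule SUP_emeasure_incseq[OF r i, symmetric])
    qed
    also have "\<dots> \<le> ennreal eta"
      by (rule SUP_least) (rule M0(2))
    finally show ?thesis by simp
  qed
  have "emeasure lborel (Vset n) \<le> 0"
  proof (rule ennreal_le_epsilon)
    fix e :: real assume "0 < e" then show "emeasure lborel (Vset n) \<le> 0 + ennreal e" by (rule A)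
  qed
  then show ?thesis using mV by (simp add: null_sets_def)
qed

lemma nonconv_in_V:
  assumes t: "t \<in> {0..1}" and nc: "\<not> convergent (\<lambda>N. tp (F N) t)"
  shows "\<exists>n. t \<in> Vset n"
proof -
  let ?f = "\<lambda>N. tp (F N) t"
  have "\<not> Cauchy ?f" using nc Cauchy_convergent_iff by blast
  then obtain e where e: "0 < e" and ne: "\<And>M. \<exists>m\<ge>M. \<exists>k\<ge>M. e \<le> dist (?f m) (?f k)"
    unfolding Cauchy_def by (meson not_less)
  obtain n where n: "inverse (real (Suc n)) < e / 4" using reals_Archimedean[of "e / 4"] e by auto
  have lam: "2 * (1 / (real n + 1)) < e / 2" using n by (simp add: field_simps)
  have "t \<in> (\<Union>L. Sset n (Suc M) L)" for M
    proof -
      obtain m k where mk: "Suc M \<le> m" "Suc M \<le> k" "e \<le> dist (?f m) (?f k)" using ne[of "Suc M"] by blast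
      have "dist (?f m) (?f k) \<le> cmod (?f m - ?f (Suc M)) + cmod (?f k - ?f (Suc M))"
        by (simp add: dist_norm norm_triangle_ineq4[of "?f m - ?f (Suc M)" "?f k - ?f (Suc M)", simplified])
      then consider "e / 2 \<le> cmod (?f m - ?f (Suc M))" | "e / 2 \<le> cmod (?f k - ?f (Suc M))"
        using mk(3) by linarith
      then have "\<exists>j\<in>{Suc M..max m k}. 2 * (1 / (real n + 1)) < cmod (?f j - ?f (Suc M))"
      proof cases
        case 1 then show ?thesis using lam mk by (intro bexI[of _ m]) auto
      next
        case 2 then show ?thesis using lam mk by (intro bexI[of _ k]) auto
      qed
      then have "t \<in> Sset n (Suc M) (max m k)" using t by (simp add: Sset_def)
      then show ?thesis by blast
    qed
  then have "t \<in> Vset n" unfolding Vset_def by blast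
  then show ?thesis by blast
qed

lemma ae_conv_abstract: "AE t in lborel. t \<in> {0..1} \<longrightarrow> convergent (\<lambda>N. tp (F N) t)"
proof (rule AE_I')
  show "(\<Union>n. Vset n) \<in> null_sets lborel" using Vset_null by blast
  show "{x \<in> space lborel. \<not> (x \<in> {0..1} \<longrightarrow> convergent (\<lambda>N. tp (F N) x))} \<subseteq> (\<Union>n. Vset n)"
    using nonconv_in_V by blast
qed

end

fun cab :: "(nat \<Rightarrow> nat) \<Rightarrow> (nat \<Rightarrow> complex) \<Rightarrow> nat \<Rightarrow> (int \<Rightarrow> complex) \<times> (int \<Rightarrow> complex)" where
  "cab m c 0 = ((\<lambda>j. if j = 0 then 1 else 0), (\<lambda>j. 0))"
| "cab m c (Suc N) = ((\<lambda>j. fst (cab m c N) j + cnj (c (Suc N)) * snd (cab m c N) (j + int (m (Suc N)))),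
                      (\<lambda>j. snd (cab m c N) j + c (Suc N) * fst (cab m c N) (j - int (m (Suc N)))))"

definition ca where "ca m c N = fst (cab m c N)"
definition cb where "cb m c N = snd (cab m c N)"

lemma ca_0: "ca m c 0 j = (if j = 0 then 1 else 0)" by (simp add: ca_def)
lemma cb_0: "cb m c 0 j = 0" by (simp add: cb_def)
lemma ca_Suc: "ca m c (Suc N) j = ca m c N j + cnj (c (Suc N)) * cb m c N (j + int (m (Suc N)))"
  by (simp add: ca_def cb_def)
lemma cb_Suc: "cb m c (Suc N) j = cb m c N j + c (Suc N) * ca m c N (j - int (m (Suc N)))"
  by (simp add: ca_def cb_def)

context
  fixes m :: "nat \<Rightarrow> nat" and c :: "nat \<Rightarrow> complex"
  assumes lac: "lac m"
begin

lemma m_pos: "1 \<le> k \<Longrightarrow> 0 < m k" using lac by (auto simp: lac_def)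
lemma m_lac: "1 \<le> k \<Longrightarrow> 2 * m k \<le> m (Suc k)" using lac by (auto simp: lac_def)

lemma supports:
  "(ca m c N j \<noteq> 0 \<longrightarrow> j \<le> 0 \<and> (N = 0 \<longrightarrow> j = 0) \<and> (1 \<le> N \<longrightarrow> - int (m N) < j)) \<and>
   (cb m c N j \<noteq> 0 \<longrightarrow> 1 \<le> N \<and> 0 < j \<and> j \<le> int (m N))"
proof (induction N arbitrary: j)
  case 0 then show ?case by (simp add: ca_0 cb_0)
next
  case (Suc N)
  define m' where "m' = m (Suc N)"
  have m'pos: "0 < m'" using m_pos[of "Suc N"] by (simp add: m'_def)
  have mN: "1 \<le> N \<Longrightarrow> 2 * m N \<le> m'" using m_lac[of N] by (simp add: m'_def)
  have A: "j \<le> 0 \<and> (Suc N = 0 \<longrightarrow> j = 0) \<and> (1 \<le> Suc N \<longrightarrow> - int (m (Suc N)) < j)"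
    if nz: "ca m c (Suc N) j \<noteq> 0"
  proof -
    from nz consider "ca m c N j \<noteq> 0" | "cb m c N (j + int m') \<noteq> 0"
      by (cases "ca m c N j = 0") (auto simp: ca_Suc m'_def)
    then show ?thesis
    proof cases
      case 1
      then have h: "j \<le> 0 \<and> (N = 0 \<longrightarrow> j = 0) \<and> (1 \<le> N \<longrightarrow> - int (m N) < j)" using Suc.IH by blast
      have "- int (m (Suc N)) < j"
      proof (cases "N = 0")
        case True then show ?thesis using h m'pos by (simp add: m'_def)
      next
        case False then show ?thesis using h mN by (simp add: m'_def)
      qed
      then show ?thesis using h by simp
    next
      case 2
      then have h: "1 \<le> N \<and> 0 < j + int m' \<and> j + int m' \<le> int (m N)" using Suc.IH by blast
      then show ?thesis using mN by (simp add: m'_def)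
    qed
  qed
  have B: "1 \<le> Suc N \<and> 0 < j \<and> j \<le> int (m (Suc N))" if nz: "cb m c (Suc N) j \<noteq> 0"
  proof -
    from nz consider "cb m c N j \<noteq> 0" | "ca m c N (j - int m') \<noteq> 0"
      by (cases "cb m c N j = 0") (auto simp: cb_Suc m'_def)
    then show ?thesis
    proof cases
      case 1
      then have h: "1 \<le> N \<and> 0 < j \<and> j \<le> int (m N)" using Suc.IH by blast
      then show ?thesis using mN by (simp add: m'_def)
    next
      case 2
      then have h: "j - int m' \<le> 0 \<and> (N = 0 \<longrightarrow> j - int m' = 0) \<and> (1 \<le> N \<longrightarrow> - int (m N) < j - int m')"
        using Suc.IH by blast
      have "0 < j"
      proof (cases "N = 0")
        case True then show ?thesis using h m'pos by simp
      next
        case False then show ?thesis using h mN by simp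
      qed
      then show ?thesis using h by (simp add: m'_def)
    qed
  qed
  show ?case using A B by blast
qed

lemma supp_ca_sub: "supp (ca m c N) \<subseteq> {- int (m N)..0}"
proof
  fix x assume "x \<in> supp (ca m c N)"
  then have "ca m c N x \<noteq> 0" by (simp add: supp_def)
  then have h: "x \<le> 0 \<and> (N = 0 \<longrightarrow> x = 0) \<and> (1 \<le> N \<longrightarrow> - int (m N) < x)"
    using supports[of N x] by blast
  then show "x \<in> {- int (m N)..0}" by (cases "N = 0") auto
qed
lemma supp_cb_sub: "supp (cb m c N) \<subseteq> {0..int (m N)}"
proof
  fix x assume "x \<in> supp (cb m c N)"
  then have "cb m c N x \<noteq> 0" by (simp add: supp_def)
  then have h: "1 \<le> N \<and> 0 < x \<and> x \<le> int (m N)"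
    using supports[of N x] by blast
  then show "x \<in> {0..int (m N)}" by auto
qed
lemma fs_ca: "finite (supp (ca m c N))"
  by (rule finite_subset[OF supp_ca_sub]) simp
lemma fs_cb: "finite (supp (cb m c N))"
  by (rule finite_subset[OF supp_cb_sub]) simp

lemma zero_ca: "1 \<le> k \<Longrightarrow> \<not> inwin m k j \<Longrightarrow> ca m c k j = 0"
  using supports[of k j] by (auto simp: inwin_def)
lemma zero_cb: "1 \<le> k \<Longrightarrow> \<not> inwin m k j \<Longrightarrow> cb m c k j = 0"
  using supports[of k j] by (auto simp: inwin_def)

lemma proj_both:
  assumes "1 \<le> k" "k \<le> N" "inwin m k j"
  shows "ca m c N j = ca m c k j \<and> cb m c N j = cb m c k j"
  using assms(2)
proof (induction N rule: dec_induct)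
  case base then show ?case by simp
next
  case (step n)
  define m' where "m' = m (Suc n)"
  have n1: "1 \<le> n" using assms(1) step(1) by simp
  have mn: "2 * m n \<le> m'" using m_lac[OF n1] by (simp add: m'_def)
  have mkn: "m k \<le> m n" using lac_mono[OF lac assms(1) step(1)] .
  have j: "- int (m k) < j" "j \<le> int (m k)" using assms(3) by (auto simp: inwin_def)
  have z1: "cb m c n (j + int m') = 0"
  proof (rule ccontr)
    assume "cb m c n (j + int m') \<noteq> 0"
    then have "j + int m' \<le> int (m n)" using supports[of n "j + int m'"] by blast
    then show False using j mn mkn by linarith
  qed
  have z2: "ca m c n (j - int m') = 0"
  proof (rule ccontr)
    assume "ca m c n (j - int m') \<noteq> 0"
    then have "- int (m n) < j - int m'" using supports[of n "j - int m'"] n1 by blast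
    then show False using j mn mkn by linarith
  qed
  show ?case using step.IH z1 z2 by (simp add: ca_Suc cb_Suc m'_def)
qed

lemma disj_a: "ca m c N j = 0 \<or> cb m c N (j + int (m (Suc N))) = 0"
proof (rule ccontr)
  assume "\<not> ?thesis"
  then have a: "ca m c N j \<noteq> 0" and b: "cb m c N (j + int (m (Suc N))) \<noteq> 0" by auto
  from b have hb: "1 \<le> N \<and> j + int (m (Suc N)) \<le> int (m N)" using supports[of N "j + int (m (Suc N))"] by blast
  from a hb have "- int (m N) < j" using supports[of N j] by blast
  then show False using hb m_lac[of N] by linarith
qed

lemma disj_b: "cb m c N j = 0 \<or> ca m c N (j - int (m (Suc N))) = 0"
proof (rule ccontr)
  assume "\<not> ?thesis"
  then have a: "cb m c N j \<noteq> 0" and b: "ca m c N (j - int (m (Suc N))) \<noteq> 0" by auto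
  from a have ha: "1 \<le> N \<and> j \<le> int (m N)" using supports[of N j] by blast
  from b ha have "- int (m N) < j - int (m (Suc N))" using supports[of N "j - int (m (Suc N))"] by blast
  then show False using ha m_lac[of N] by linarith
qed

end

lemma fs_shift_mult:
  assumes "finite (supp f)"
  shows "finite (supp (\<lambda>j. x * f (j + s)))"
proof -
  have "supp (\<lambda>j. x * f (j + s)) \<subseteq> (\<lambda>j. j - s) ` supp f"
    by (auto simp: supp_def image_iff intro!: exI[of _ "j + s" for j])
  then show ?thesis using assms by (meson finite_imageI finite_subset)
qed

lemma sq_shift_mult:
  assumes "finite (supp f)"
  shows "sq (\<lambda>j. x * f (j + s)) = (cmod x)\<^sup>2 * sq f"
proof -
  have sub: "supp (\<lambda>j. x * f (j + s)) \<subseteq> (\<lambda>j. j - s) ` supp f"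
    by (auto simp: supp_def image_iff intro!: exI[of _ "j + s" for j])
  have "sq (\<lambda>j. x * f (j + s)) = (\<Sum>j\<in>(\<lambda>j. j - s) ` supp f. (cmod (x * f (j + s)))\<^sup>2)"
    by (rule sq_eq_sum[OF _ sub]) (use assms in simp)
  also have "\<dots> = (\<Sum>i\<in>supp f. (cmod (x * f i))\<^sup>2)"
    by (subst sum.reindex) (auto simp: inj_on_def)
  also have "\<dots> = (cmod x)\<^sup>2 * sq f"
    by (simp add: sq_def sum_distrib_left norm_mult power_mult_distrib)
  finally show ?thesis .
qed

lemma tp_shift_mult:
  assumes "finite (supp f)"
  shows "tp (\<lambda>j. x * f (j + s)) t = x * E (- s) t * tp f t"
proof -
  have fs: "finite (supp (\<lambda>j. f (j - (- s))))" using fs_shift[OF assms] .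
  have "tp (\<lambda>j. x * f (j + s)) t = tp (\<lambda>j. x * f (j - (- s))) t" by simp
  also have "\<dots> = x * tp (\<lambda>j. f (j - (- s))) t" by (rule tp_scale[OF fs])
  also have "\<dots> = x * (E (- s) t * tp f t)" by (simp only: tp_shift[OF assms])
  finally show ?thesis by (simp add: mult.assoc)
qed

context
  fixes m :: "nat \<Rightarrow> nat" and c :: "nat \<Rightarrow> complex"
  assumes lac: "lac m"
begin

lemma sq_ca_Suc: "sq (ca m c (Suc N)) = sq (ca m c N) + (cmod (c (Suc N)))\<^sup>2 * sq (cb m c N)"
proof -
  have e: "ca m c (Suc N) = (\<lambda>j. ca m c N j + cnj (c (Suc N)) * cb m c N (j + int (m (Suc N))))"
    by (rule ext) (simp add: ca_Suc)
  have "sq (ca m c (Suc N)) = sq (ca m c N) + sq (\<lambda>j. cnj (c (Suc N)) * cb m c N (j + int (m (Suc N))))"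
    unfolding e
    by (rule sq_disjoint[OF fs_ca[OF lac] fs_shift_mult[OF fs_cb[OF lac]]]) (use disj_a[OF lac] in auto)
  also have "sq (\<lambda>j. cnj (c (Suc N)) * cb m c N (j + int (m (Suc N)))) = (cmod (c (Suc N)))\<^sup>2 * sq (cb m c N)"
    by (simp add: sq_shift_mult[OF fs_cb[OF lac]])
  finally show ?thesis .
qed

lemma sq_cb_Suc: "sq (cb m c (Suc N)) = sq (cb m c N) + (cmod (c (Suc N)))\<^sup>2 * sq (ca m c N)"
proof -
  have e: "cb m c (Suc N) = (\<lambda>j. cb m c N j + c (Suc N) * ca m c N (j + (- int (m (Suc N)))))"
    by (rule ext) (simp add: cb_Suc)
  have "sq (cb m c (Suc N)) = sq (cb m c N) + sq (\<lambda>j. c (Suc N) * ca m c N (j + (- int (m (Suc N)))))"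
    unfolding e
    by (rule sq_disjoint[OF fs_cb[OF lac] fs_shift_mult[OF fs_ca[OF lac]]]) (use disj_b[OF lac] in auto)
  also have "sq (\<lambda>j. c (Suc N) * ca m c N (j + (- int (m (Suc N))))) = (cmod (c (Suc N)))\<^sup>2 * sq (ca m c N)"
    by (simp only: sq_shift_mult[OF fs_ca[OF lac]])
  finally show ?thesis .
qed

lemma tp_ca_Suc: "tp (ca m c (Suc N)) t = tp (ca m c N) t + cnj (c (Suc N)) * E (- int (m (Suc N))) t * tp (cb m c N) t"
proof -
  have e: "ca m c (Suc N) = (\<lambda>j. ca m c N j + cnj (c (Suc N)) * cb m c N (j + int (m (Suc N))))"
    by (rule ext) (simp add: ca_Suc)
  show ?thesis unfolding e
    by (simp add: tp_add[OF fs_ca[OF lac] fs_shift_mult[OF fs_cb[OF lac]]] tp_shift_mult[OF fs_cb[OF lac]])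
qed

lemma tp_cb_Suc: "tp (cb m c (Suc N)) t = tp (cb m c N) t + c (Suc N) * E (int (m (Suc N))) t * tp (ca m c N) t"
proof -
  have e: "cb m c (Suc N) = (\<lambda>j. cb m c N j + c (Suc N) * ca m c N (j + (- int (m (Suc N)))))"
    by (rule ext) (simp add: cb_Suc)
  have "tp (cb m c (Suc N)) t = tp (cb m c N) t + tp (\<lambda>j. c (Suc N) * ca m c N (j + (- int (m (Suc N))))) t"
    unfolding e by (rule tp_add[OF fs_cb[OF lac] fs_shift_mult[OF fs_ca[OF lac]]])
  also have "tp (\<lambda>j. c (Suc N) * ca m c N (j + (- int (m (Suc N))))) t = c (Suc N) * E (int (m (Suc N))) t * tp (ca m c N) t"
    by (simp only: tp_shift_mult[OF fs_ca[OF lac]] minus_minus)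
  finally show ?thesis .
qed

end

lemma mat1_mat2: "(mat 1 :: complex^2^2) = mat2 1 0 (cnj 0) (cnj 1)"
  unfolding mat2_def by (simp add: vec_eq_iff mat_def forall_2 vector_def)

lemma tp_ca0: "tp (ca m c 0) t = 1"
proof -
  have "supp (ca m c 0) = {0}" by (auto simp: supp_def ca_0)
  then show ?thesis by (simp add: tp_def ca_0)
qed

lemma tp_cb0: "tp (cb m c 0) t = 0"
proof -
  have "supp (cb m c 0) = {}" by (auto simp: supp_def cb_0)
  then show ?thesis by (simp add: tp_def)
qed

lemma cnsq: "(complex_of_real (cmod z))\<^sup>2 = z * cnj z"
  using complex_norm_square[of z] by simp

lemma factor_E: "factor A B m j t = mat2 (of_real (A j)) (B j * E (int (m j)) t) (cnj (B j) * E (- int (m j)) t) (of_real (A j))"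
  unfolding factor_def E_def by simp

context
  fixes m :: "nat \<Rightarrow> nat" and A :: "nat \<Rightarrow> real" and B :: "nat \<Rightarrow> complex"
  assumes lac: "lac m"
    and Apos: "\<And>j. j \<ge> 1 \<Longrightarrow> A j > 0"
    and AB: "\<And>j. j \<ge> 1 \<Longrightarrow> (A j)\<^sup>2 - (cmod (B j))\<^sup>2 = 1"
begin

definition cc :: "nat \<Rightarrow> complex" where "cc n = B n / of_real (A n)"
definition PA :: "nat \<Rightarrow> real" where "PA N = prod A {1..N}"
definition aa :: "nat \<Rightarrow> real \<Rightarrow> complex" where "aa N t = of_real (PA N) * tp (ca m cc N) t"
definition bb :: "nat \<Rightarrow> real \<Rightarrow> complex" where "bb N t = of_real (PA N) * tp (cb m cc N) t"

lemma PA_Suc: "PA (Suc N) = PA N * A (Suc N)"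
  by (simp add: PA_def prod.nat_ivl_Suc')

lemma aa_Suc: "aa (Suc N) t = aa N t * of_real (A (Suc N)) + bb N t * (cnj (B (Suc N)) * E (- int (m (Suc N))) t)"
proof -
  have A0: "A (Suc N) \<noteq> 0" using Apos[of "Suc N"] by simp
  have "aa (Suc N) t = of_real (PA N) * of_real (A (Suc N)) * (tp (ca m cc N) t + cnj (cc (Suc N)) * E (- int (m (Suc N))) t * tp (cb m cc N) t)"
    by (simp add: aa_def PA_Suc tp_ca_Suc[OF lac])
  also have "\<dots> = aa N t * of_real (A (Suc N)) + bb N t * (cnj (B (Suc N)) * E (- int (m (Suc N))) t)"
    using A0 by (simp add: aa_def bb_def cc_def field_simps)
  finally show ?thesis .
qed

lemma bb_Suc: "bb (Suc N) t = aa N t * (B (Suc N) * E (int (m (Suc N))) t) + bb N t * of_real (A (Suc N))"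
proof -
  have A0: "A (Suc N) \<noteq> 0" using Apos[of "Suc N"] by simp
  have "bb (Suc N) t = of_real (PA N) * of_real (A (Suc N)) * (tp (cb m cc N) t + cc (Suc N) * E (int (m (Suc N))) t * tp (ca m cc N) t)"
    by (simp add: bb_def PA_Suc tp_cb_Suc[OF lac])
  also have "\<dots> = aa N t * (B (Suc N) * E (int (m (Suc N))) t) + bb N t * of_real (A (Suc N))"
    using A0 by (simp add: aa_def bb_def cc_def field_simps)
  finally show ?thesis .
qed

lemma pp_repr: "partial_prod A B m N t = mat2 (aa N t) (bb N t) (cnj (bb N t)) (cnj (aa N t))"
proof (induction N)
  case 0
  show ?case by (simp add: mat1_mat2 aa_def bb_def PA_def tp_ca0 tp_cb0)
next
  case (Suc N)
  have e: "cnj (E (int (m (Suc N))) t) = E (- int (m (Suc N))) t" "cnj (E (- int (m (Suc N))) t) = E (int (m (Suc N))) t"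
    by (simp_all add: cnj_E)
  show ?case
    by (simp add: Suc.IH factor_E mat2_mult aa_Suc bb_Suc e add_ac)
qed

lemma inv_det: "(cmod (aa N t))\<^sup>2 - (cmod (bb N t))\<^sup>2 = 1"
proof (induction N)
  case 0
  then show ?case by (simp add: aa_def bb_def PA_def tp_ca0 tp_cb0)
next
  case (Suc N)
  define a where "a = aa N t"
  define b where "b = bb N t"
  define u where "u = E (int (m (Suc N))) t"
  define x where "x = A (Suc N)"
  define y where "y = B (Suc N)"
  have u: "u * cnj u = 1" unfolding u_def by (rule E_mult_cnj)
  have cu: "E (- int (m (Suc N))) t = cnj u" unfolding u_def by (simp add: cnj_E)
  have xy: "x\<^sup>2 - (cmod y)\<^sup>2 = 1" unfolding x_def y_def using AB[of "Suc N"] by simp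
  have ab: "(cmod a)\<^sup>2 - (cmod b)\<^sup>2 = 1" using Suc.IH by (simp add: a_def b_def)
  have "complex_of_real ((cmod (aa (Suc N) t))\<^sup>2 - (cmod (bb (Suc N) t))\<^sup>2)
        = (a * of_real x + b * (cnj y * cnj u)) * cnj (a * of_real x + b * (cnj y * cnj u))
          - (a * (y * u) + b * of_real x) * cnj (a * (y * u) + b * of_real x)"
    by (simp add: aa_Suc bb_Suc cu cnsq flip: a_def b_def u_def x_def y_def)
  also have "\<dots> = (of_real x * of_real x - y * cnj y) * (a * cnj a - b * cnj b)"
  proof -
    have "(a * of_real x + b * (cnj y * cnj u)) * cnj (a * of_real x + b * (cnj y * cnj u))
          - (a * (y * u) + b * of_real x) * cnj (a * (y * u) + b * of_real x)
        = (a * of_real x + b * (cnj y * cnj u)) * (cnj a * of_real x + cnj b * (y * u))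
          - (a * (y * u) + b * of_real x) * (cnj a * (cnj y * cnj u) + cnj b * of_real x)"
      by simp
    also have "\<dots> = (of_real x * of_real x - y * cnj y) * (a * cnj a - b * cnj b)
        + (u * cnj u - 1) * (b * cnj b * y * cnj y - a * cnj a * y * cnj y)"
      by (simp add: algebra_simps)
    finally show ?thesis using u by simp
  qed
  also have "\<dots> = of_real ((x\<^sup>2 - (cmod y)\<^sup>2) * ((cmod a)\<^sup>2 - (cmod b)\<^sup>2))"
    by (simp add: cnsq power2_eq_square[of "complex_of_real x"])
  also have "\<dots> = 1" using xy ab by simp
  finally show ?case by (simp only: of_real_eq_1_iff)
qed

lemma A_ge1: "j \<ge> 1 \<Longrightarrow> 1 \<le> A j"
proof (rule ccontr)
  assume j: "j \<ge> 1" and "\<not> 1 \<le> A j"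
  then have a: "A j < 1" by simp
  have "(A j)\<^sup>2 = 1 + (cmod (B j))\<^sup>2" using AB[OF j] by simp
  then have "1 \<le> A j * A j" by (simp add: power2_eq_square)
  moreover have "A j * A j < 1 * 1" using a Apos[OF j] by (intro mult_strict_mono) auto
  ultimately show False by simp
qed

lemma x_ge1: "j \<ge> 1 \<Longrightarrow> 1 \<le> (A j)\<^sup>2 + (cmod (B j))\<^sup>2"
proof -
  assume j: "j \<ge> 1"
  have "0 \<le> (cmod (B j))\<^sup>2" by simp
  then show ?thesis using AB[OF j] by linarith
qed

lemma cc_bound: "j \<ge> 1 \<Longrightarrow> 1 + (cmod (cc j))\<^sup>2 \<le> (A j)\<^sup>2 + (cmod (B j))\<^sup>2"
proof -
  assume j: "j \<ge> 1"
  have A1: "1 \<le> (A j)\<^sup>2" using A_ge1[OF j] by (simp add: one_le_power)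
  have "(cmod (cc j))\<^sup>2 = (cmod (B j))\<^sup>2 / (A j)\<^sup>2"
    using Apos[OF j] by (simp add: cc_def norm_divide power_divide)
  also have "\<dots> \<le> (cmod (B j))\<^sup>2 / 1"
    using A1 by (intro divide_left_mono) auto
  finally have "(cmod (cc j))\<^sup>2 \<le> (cmod (B j))\<^sup>2" by simp
  then show ?thesis using A1 by linarith
qed

lemma sq_ca0: "sq (ca m c 0) = 1"
proof -
  have "supp (ca m c 0) = {0}" by (auto simp: supp_def ca_0)
  then show ?thesis by (simp add: sq_def ca_0)
qed

lemma sq_cb0: "sq (cb m c 0) = 0"
proof -
  have "supp (cb m c 0) = {}" by (auto simp: supp_def cb_0)
  then show ?thesis by (simp add: sq_def)
qed

lemma T_bound: "sq (ca m cc N) + sq (cb m cc N) \<le> (\<Prod>n<N. (A (Suc n))\<^sup>2 + (cmod (B (Suc n)))\<^sup>2)"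
proof (induction N)
  case 0 then show ?case by (simp add: sq_ca0 sq_cb0)
next
  case (Suc N)
  have "sq (ca m cc (Suc N)) + sq (cb m cc (Suc N)) = (1 + (cmod (cc (Suc N)))\<^sup>2) * (sq (ca m cc N) + sq (cb m cc N))"
    by (simp add: sq_ca_Suc[OF lac] sq_cb_Suc[OF lac] algebra_simps)
  also have "\<dots> \<le> ((A (Suc N))\<^sup>2 + (cmod (B (Suc N)))\<^sup>2) * (\<Prod>n<N. (A (Suc n))\<^sup>2 + (cmod (B (Suc n)))\<^sup>2)"
    using cc_bound[of "Suc N"] Suc.IH
    by (intro mult_mono) (auto intro!: add_nonneg_nonneg sq_nonneg)
  finally show ?case by (simp add: mult.commute)
qed

definition Ssum where "Ssum = suminf (\<lambda>j. ln ((A (Suc j))\<^sup>2 + (cmod (B (Suc j)))\<^sup>2))"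

lemma prod_bound:
  assumes sm: "summable (\<lambda>j. ln ((A (Suc j))\<^sup>2 + (cmod (B (Suc j)))\<^sup>2))"
  shows "(\<Prod>n<N. (A (Suc n))\<^sup>2 + (cmod (B (Suc n)))\<^sup>2) \<le> exp Ssum"
proof -
  have pos: "0 < (A (Suc n))\<^sup>2 + (cmod (B (Suc n)))\<^sup>2" for n
    using x_ge1[of "Suc n"] by simp
  have "(\<Prod>n<N. (A (Suc n))\<^sup>2 + (cmod (B (Suc n)))\<^sup>2) = exp (\<Sum>n<N. ln ((A (Suc n))\<^sup>2 + (cmod (B (Suc n)))\<^sup>2))"
    by (simp add: exp_sum pos)
  also have "\<dots> \<le> exp Ssum"
    unfolding Ssum_def
  proof (rule exp_mono[OF sum_le_suminf[OF sm]])
    fix n show "0 \<le> ln ((A (Suc n))\<^sup>2 + (cmod (B (Suc n)))\<^sup>2)"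
      using x_ge1[of "Suc n"] by simp
  qed simp
  finally show ?thesis .
qed

lemma PA_conv:
  assumes sm: "summable (\<lambda>j. ln ((A (Suc j))\<^sup>2 + (cmod (B (Suc j)))\<^sup>2))"
  shows "convergent PA"
proof -
  have sm2: "summable (\<lambda>n. ln (A (Suc n)))"
  proof (rule summable_comparison_test'[OF sm])
    fix n :: nat
    have A1: "1 \<le> A (Suc n)" using A_ge1[of "Suc n"] by simp
    have "A (Suc n) \<le> A (Suc n) * A (Suc n)" using A1 by (simp add: mult_le_cancel_left1)
    also have "\<dots> \<le> (A (Suc n))\<^sup>2 + (cmod (B (Suc n)))\<^sup>2" by (simp add: power2_eq_square)
    finally have le: "A (Suc n) \<le> (A (Suc n))\<^sup>2 + (cmod (B (Suc n)))\<^sup>2" .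
    have "norm (ln (A (Suc n))) = ln (A (Suc n))" using A1 by simp
    also have "\<dots> \<le> ln ((A (Suc n))\<^sup>2 + (cmod (B (Suc n)))\<^sup>2)" using le A1 by simp
    finally show "norm (ln (A (Suc n))) \<le> ln ((A (Suc n))\<^sup>2 + (cmod (B (Suc n)))\<^sup>2)" .
  qed
  have eq: "PA N = exp (\<Sum>n<N. ln (A (Suc n)))" for N
  proof -
    have "PA N = (\<Prod>n<N. A (Suc n))" by (simp add: PA_def prod.atLeast1_atMost_eq)
    also have "\<dots> = (\<Prod>n<N. exp (ln (A (Suc n))))"
      by (intro prod.cong refl) (use Apos in simp)
    also have "\<dots> = exp (\<Sum>n<N. ln (A (Suc n)))" by (simp add: exp_sum)
    finally show ?thesis .
  qed
  have "(\<lambda>N. exp (\<Sum>n<N. ln (A (Suc n)))) \<longlonglongrightarrow> exp (suminf (\<lambda>n. ln (A (Suc n))))"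
    by (intro tendsto_exp summable_LIMSEQ sm2)
  then show ?thesis unfolding convergent_def eq[abs_def] by blast
qed

end

lemma mat2_chi: "mat2 a b c d = (\<chi> i j. if i = 1 then (if j = 1 then a else b) else (if j = 1 then c else d))"
  unfolding mat2_def by (simp add: vec_eq_iff forall_2 vector_def)

lemma tendsto_mat2:
  assumes "(f \<longlongrightarrow> a) F" "(g \<longlongrightarrow> b) F" "(h \<longlongrightarrow> c) F" "(k \<longlongrightarrow> d) F"
  shows "((\<lambda>x. mat2 (f x) (g x) (h x) (k x)) \<longlongrightarrow> mat2 a b c d) F"
  unfolding mat2_chi
proof (intro tendsto_vec_lambda)
  fix i j :: 2
  show "((\<lambda>x. if i = 1 then (if j = 1 then f x else g x) else (if j = 1 then h x else k x)) \<longlongrightarrow>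
         (if i = 1 then (if j = 1 then a else b) else (if j = 1 then c else d))) F"
    using assms by (cases "i = 1"; cases "j = 1") simp_all
qed

lemma main_ae:
  fixes m :: "nat \<Rightarrow> nat" and A :: "nat \<Rightarrow> real" and B :: "nat \<Rightarrow> complex"
  assumes lac: "lac m"
    and Apos: "\<And>j. j \<ge> 1 \<Longrightarrow> A j > 0"
    and AB: "\<And>j. j \<ge> 1 \<Longrightarrow> (A j)\<^sup>2 - (cmod (B j))\<^sup>2 = 1"
    and sm: "summable (\<lambda>j. ln ((A (Suc j))\<^sup>2 + (cmod (B (Suc j)))\<^sup>2))"
  shows "AE t in lebesgue_on {0..1}. \<exists>G \<in> SU11. (\<lambda>N. partial_prod A B m N t) \<longlonglongrightarrow> G"
proof -
  let ?c = "cc A B"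
  have bndT: "sq (ca m ?c N) + sq (cb m ?c N) \<le> exp (Ssum A B)" for N
    using T_bound[where m=m and A=A and B=B and N=N, OF lac Apos AB] prod_bound[where m=m and A=A and B=B and N=N, OF lac Apos AB sm] by linarith
  have ae1: "AE t in lborel. t \<in> {0..1} \<longrightarrow> convergent (\<lambda>N. tp (ca m ?c N) t)"
  proof (rule ae_conv_abstract[OF lac])
    show "finite (supp (ca m ?c N))" for N by (rule fs_ca[OF lac])
    show "ca m ?c N j = ca m ?c k j" if "1 \<le> k" "k \<le> N" "inwin m k j" for k N j
      using proj_both[OF lac that] by blast
    show "ca m ?c k j = 0" if "1 \<le> k" "\<not> inwin m k j" for k j
      by (rule zero_ca[OF lac that])
    show "sq (ca m ?c N) \<le> exp (Ssum A B)" for N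
      using bndT[of N] sq_nonneg[of "cb m ?c N"] by linarith
  qed
  have ae2: "AE t in lborel. t \<in> {0..1} \<longrightarrow> convergent (\<lambda>N. tp (cb m ?c N) t)"
  proof (rule ae_conv_abstract[OF lac])
    show "finite (supp (cb m ?c N))" for N by (rule fs_cb[OF lac])
    show "cb m ?c N j = cb m ?c k j" if "1 \<le> k" "k \<le> N" "inwin m k j" for k N j
      using proj_both[OF lac that] by blast
    show "cb m ?c k j = 0" if "1 \<le> k" "\<not> inwin m k j" for k j
      by (rule zero_cb[OF lac that])
    show "sq (cb m ?c N) \<le> exp (Ssum A B)" for N
      using bndT[of N] sq_nonneg[of "ca m ?c N"] by linarith
  qed
  obtain P where P: "PA A \<longlonglongrightarrow> P" using PA_conv[where m=m and A=A and B=B, OF lac Apos AB sm] by (auto simp: convergent_def)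
  have pw: "\<exists>G \<in> SU11. (\<lambda>N. partial_prod A B m N t) \<longlonglongrightarrow> G"
    if c1: "convergent (\<lambda>N. tp (ca m ?c N) t)" and c2: "convergent (\<lambda>N. tp (cb m ?c N) t)" for t
  proof -
    obtain \<alpha> where \<alpha>: "(\<lambda>N. tp (ca m ?c N) t) \<longlonglongrightarrow> \<alpha>" using c1 by (auto simp: convergent_def)
    obtain \<beta> where \<beta>: "(\<lambda>N. tp (cb m ?c N) t) \<longlonglongrightarrow> \<beta>" using c2 by (auto simp: convergent_def)
    define a where "a = of_real P * \<alpha>"
    define b where "b = of_real P * \<beta>"
    have ea: "(\<lambda>N. aa m A B N t) = (\<lambda>N. of_real (PA A N) * tp (ca m ?c N) t)"
      using aa_def[OF lac Apos AB] by auto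
    have eb: "(\<lambda>N. bb m A B N t) = (\<lambda>N. of_real (PA A N) * tp (cb m ?c N) t)"
      using bb_def[OF lac Apos AB] by auto
    have la: "(\<lambda>N. aa m A B N t) \<longlonglongrightarrow> a"
      unfolding ea a_def by (intro tendsto_mult tendsto_of_real P \<alpha>)
    have lb: "(\<lambda>N. bb m A B N t) \<longlonglongrightarrow> b"
      unfolding eb b_def by (intro tendsto_mult tendsto_of_real P \<beta>)
    have ep: "(\<lambda>N. partial_prod A B m N t) = (\<lambda>N. mat2 (aa m A B N t) (bb m A B N t) (cnj (bb m A B N t)) (cnj (aa m A B N t)))"
      using pp_repr[where m=m and A=A and B=B, OF lac Apos AB] by auto
    have lim: "(\<lambda>N. partial_prod A B m N t) \<longlonglongrightarrow> mat2 a b (cnj b) (cnj a)"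
      unfolding ep by (intro tendsto_mat2 la lb tendsto_cnj)
    have "(\<lambda>N. (cmod (aa m A B N t))\<^sup>2 - (cmod (bb m A B N t))\<^sup>2) \<longlonglongrightarrow> (cmod a)\<^sup>2 - (cmod b)\<^sup>2"
      by (intro tendsto_intros la lb)
    moreover have "(\<lambda>N. (cmod (aa m A B N t))\<^sup>2 - (cmod (bb m A B N t))\<^sup>2) = (\<lambda>N. 1)"
      using inv_det[where m=m and A=A and B=B, OF lac Apos AB] by simp
    ultimately have "(cmod a)\<^sup>2 - (cmod b)\<^sup>2 = 1"
      using LIMSEQ_unique tendsto_const by metis
    then have "mat2 a b (cnj b) (cnj a) \<in> SU11" unfolding SU11_def by blast
    then show ?thesis using lim by blast
  qed
  have "AE t in lborel. t \<in> {0..1} \<longrightarrow> (\<exists>G \<in> SU11. (\<lambda>N. partial_prod A B m N t) \<longlonglongrightarrow> G)"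
    using ae1 ae2 by eventually_elim (use pw in blast)
  then have "AE t in lebesgue. t \<in> {0..1} \<longrightarrow> (\<exists>G \<in> SU11. (\<lambda>N. partial_prod A B m N t) \<longlonglongrightarrow> G)"
    by (rule AE_completion)
  then show ?thesis
    by (subst AE_restrict_space_iff) auto
qed

theorem theorem1p2:
  fixes m :: "nat \<Rightarrow> nat" and q :: real and A :: "nat \<Rightarrow> real" and B :: "nat \<Rightarrow> complex"
  assumes "q \<ge> 2"
    and "\<And>j. j \<ge> 1 \<Longrightarrow> m j > 0"
    and "\<And>j. j \<ge> 1 \<Longrightarrow> m j < m (Suc j)"
    and "\<And>j. j \<ge> 1 \<Longrightarrow> real (m (Suc j)) \<ge> q * real (m j)"
    and "\<And>j. j \<ge> 1 \<Longrightarrow> A j > 0"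
    and "\<And>j. j \<ge> 1 \<Longrightarrow> (A j)\<^sup>2 - (cmod (B j))\<^sup>2 = 1"
    and "summable (\<lambda>j. ln ((A (Suc j))\<^sup>2 + (cmod (B (Suc j)))\<^sup>2))"
  shows "AE t in lebesgue_on {0..1}. \<exists>G \<in> SU11. (\<lambda>N. partial_prod A B m N t) \<longlonglongrightarrow> G"
proof -
  have lac: "lac m"
    unfolding lac_def
  proof (intro allI impI conjI)
    fix k :: nat assume k: "1 \<le> k"
    show "0 < m k" using assms(2) k by simp
    have "2 * real (m k) \<le> q * real (m k)" using assms(1) by (intro mult_right_mono) auto
    also have "\<dots> \<le> real (m (Suc k))" using assms(4) k by simp
    finally show "2 * m k \<le> m (Suc k)" by linarith
  qed
  show ?thesis by (rule main_ae[OF lac assms(5,6,7)])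
qed

end
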